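(* Let $B$ be an integral domain of characteristic zero, $n\ge3$, $x_1,\dots,x_n\in B$ and $a_1,\dots,a_n$ positive integers. Assume (i) $x_1^{a_1}+\cdots+x_n^{a_n}=0$; (ii) $\sum_{i=1}^n\frac1{a_i}\le\frac1{n-2}$; (iii) $x_1,\dots,x_n$ are pairwise relatively prime in $B$. Then $x_1,\dots,x_n\in\mathrm{ML}(R)$ in each of the following cases: (a) $R$ is a factorially closed subring of $B$ with $x_1,\dots,x_n\in R$; (b) $R=B^{[N]}$ (a polynomial ring in $N$ variables over $B$) for some $N\ge0$. Moreover, $x_1,\dots,x_n$ belong to the rigid core of $B$.
   Context: Two elements $x,y$ of a domain $B$ are relatively prime if $xB\cap yB=xyB$ and, if $0\in\{x,y\}$, then one of $x,y$ is a unit of $B$. A subring $A$ of a domain $B$ is factorially closed if for all nonzero $x,y\in B$, $xy\in A$ implies $x,y\in A$. For a domain $R$ of characteristic zero, $\mathrm{ML}(R)=\bigcap_{D}\ker D$ over all locally nilpotent derivations $D:R\to R$ (derivations such that each element is killed by some power of $D$). The rigid core of $B$ is $\bigcap_{i\ge0}\mathrm{ML}_i(B)$ where $\mathrm{ML}_0(B)=B$ and $\mathrm{ML}_{i+1}(B)=\mathrm{ML}(\mathrm{ML}_i(B))$. *)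

theory Defs
  imports Complex_Main "HOL-Library.Poly_Mapping"
begin

text \<open>Subrings of the ambient ring B (given by the type).\<close>
definition subring :: "'a::comm_ring_1 set \<Rightarrow> bool" where
  "subring R \<longleftrightarrow> 0 \<in> R \<and> 1 \<in> R \<and>
     (\<forall>x\<in>R. \<forall>y\<in>R. x + y \<in> R \<and> x - y \<in> R \<and> x * y \<in> R)"

definition rel_prime :: "'a::comm_ring_1 \<Rightarrow> 'a \<Rightarrow> bool" where
  "rel_prime x y \<longleftrightarrow>
     range (\<lambda>b. x * b) \<inter> range (\<lambda>b. y * b) = range (\<lambda>b. x * y * b) \<and>
     ((x = 0 \<or> y = 0) \<longrightarrow> (x dvd 1 \<or> y dvd 1))"

definition factorially_closed :: "'a::comm_ring_1 set \<Rightarrow> bool" where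
  "factorially_closed A \<longleftrightarrow>
     (\<forall>x y. x \<noteq> 0 \<longrightarrow> y \<noteq> 0 \<longrightarrow> x * y \<in> A \<longrightarrow> x \<in> A \<and> y \<in> A)"

text \<open>Derivations of a subring R (only the restriction of D to R matters).\<close>
definition derivation_on :: "'a::comm_ring_1 set \<Rightarrow> ('a \<Rightarrow> 'a) \<Rightarrow> bool" where
  "derivation_on R D \<longleftrightarrow> (\<forall>a\<in>R. D a \<in> R) \<and>
     (\<forall>a\<in>R. \<forall>b\<in>R. D (a + b) = D a + D b \<and> D (a * b) = a * D b + b * D a)"

definition lnd_on :: "'a::comm_ring_1 set \<Rightarrow> ('a \<Rightarrow> 'a) \<Rightarrow> bool" where
  "lnd_on R D \<longleftrightarrow> derivation_on R D \<and> (\<forall>a\<in>R. \<exists>k. (D ^^ k) a = 0)"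

definition mlinv :: "'a::comm_ring_1 set \<Rightarrow> 'a set" where
  "mlinv R = {a \<in> R. \<forall>D. lnd_on R D \<longrightarrow> D a = 0}"

fun mlinv_iter :: "nat \<Rightarrow> 'a::comm_ring_1 set" where
  "mlinv_iter 0 = UNIV"
| "mlinv_iter (Suc i) = mlinv (mlinv_iter i)"

definition rigid_core :: "'a::comm_ring_1 set" where
  "rigid_core = (\<Inter>i. mlinv_iter i)"

text \<open>The polynomial ring B^[N] in variables X_0,...,X_(N-1), as a subring of
  the polynomial ring in countably many variables (monomials are finitely supported exponent vectors).\<close>
definition poly_ring :: "nat \<Rightarrow> ((nat \<Rightarrow>\<^sub>0 nat) \<Rightarrow>\<^sub>0 'a::comm_ring_1) set" where
  "poly_ring N = {p :: (nat \<Rightarrow>\<^sub>0 nat) \<Rightarrow>\<^sub>0 'a. \<forall>m\<in>Poly_Mapping.keys p. \<forall>i\<in>Poly_Mapping.keys m. i < N}"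

definition const_poly :: "'a::comm_ring_1 \<Rightarrow> ((nat \<Rightarrow>\<^sub>0 nat) \<Rightarrow>\<^sub>0 'a)" where
  "const_poly b = Poly_Mapping.single 0 b"

end

theory Submission
  imports Defs "Jordan_Normal_Form.Determinant"
begin

definition dvdR :: "'b::comm_ring_1 set \<Rightarrow> 'b \<Rightarrow> 'b \<Rightarrow> bool" where
  "dvdR R x w \<longleftrightarrow> (\<exists>q\<in>R. w = x * q)"

definition rpR :: "'b::comm_ring_1 set \<Rightarrow> 'b \<Rightarrow> 'b \<Rightarrow> bool" where
  "rpR R x y \<longleftrightarrow> (\<forall>w\<in>R. dvdR R x (y * w) \<longrightarrow> dvdR R x w)"

lemma subringD:
  assumes "subring R"
  shows "0 \<in> R" "1 \<in> R" "x\<in>R \<Longrightarrow> y\<in>R \<Longrightarrow> x+y \<in> R" "x\<in>R \<Longrightarrow> y\<in>R \<Longrightarrow> x-y \<in> R"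
    "x\<in>R \<Longrightarrow> y\<in>R \<Longrightarrow> x*y \<in> R"
  using assms unfolding subring_def by auto

lemma subring_uminus: "subring R \<Longrightarrow> x \<in> R \<Longrightarrow> -x \<in> R"
  by (metis subringD(1) subringD(4) diff_0)

lemma subring_pow: "subring R \<Longrightarrow> x \<in> R \<Longrightarrow> x ^ k \<in> R"
  by (induction k) (auto intro: subringD)

lemma subring_sum: "subring R \<Longrightarrow> (\<And>i. i \<in> S \<Longrightarrow> f i \<in> R) \<Longrightarrow> sum f S \<in> R"
proof (induction S rule: infinite_finite_induct)
  case (infinite A) then show ?case by (simp add: subringD)
next
  case empty then show ?case by (simp add: subringD)
next
  case (insert x F) then show ?case by (simp add: subringD)
qed

lemma subring_prod: "subring R \<Longrightarrow> (\<And>i. i \<in> S \<Longrightarrow> f i \<in> R) \<Longrightarrow> prod f S \<in> R"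
proof (induction S rule: infinite_finite_induct)
  case (infinite A) then show ?case by (simp add: subringD)
next
  case empty then show ?case by (simp add: subringD)
next
  case (insert x F) then show ?case by (simp add: subringD)
qed

lemma subring_signof: "subring R \<Longrightarrow> (signof p :: 'b::comm_ring_1) \<in> R"
proof -
  assume s: "subring R"
  have "sign p = (1::int) \<or> sign p = -1" by (simp add: sign_def)
  then show ?thesis by (elim disjE) (simp_all add: subringD(2)[OF s] subring_uminus[OF s, of 1])
qed

locale lndR =
  fixes R :: "'b::{idom,ring_char_0} set" and D :: "'b \<Rightarrow> 'b"
  assumes sub: "subring R" and lnd: "lnd_on R D"
begin

lemma R0: "0 \<in> R" and R1: "1 \<in> R" using subringD[OF sub] by auto
lemma Radd: "x\<in>R \<Longrightarrow> y\<in>R \<Longrightarrow> x+y \<in> R" using subringD[OF sub] by auto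
lemma Rdiff: "x\<in>R \<Longrightarrow> y\<in>R \<Longrightarrow> x-y \<in> R" using subringD[OF sub] by auto
lemma Rmult: "x\<in>R \<Longrightarrow> y\<in>R \<Longrightarrow> x*y \<in> R" using subringD[OF sub] by auto
lemma Rminus: "x\<in>R \<Longrightarrow> -x \<in> R" using subring_uminus[OF sub] by auto
lemma Rpow: "x\<in>R \<Longrightarrow> x^k \<in> R" using subring_pow[OF sub] by auto
lemma Rsum: "(\<And>i. i \<in> S \<Longrightarrow> f i \<in> R) \<Longrightarrow> sum f S \<in> R" using subring_sum[OF sub] by auto
lemma Rprod: "(\<And>i. i \<in> S \<Longrightarrow> f i \<in> R) \<Longrightarrow> prod f S \<in> R" using subring_prod[OF sub] by auto
lemma Rsignof: "(signof p :: 'b) \<in> R" using subring_signof[OF sub] by auto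
lemma Rof_nat: "(of_nat k :: 'b) \<in> R"
  by (induction k) (auto simp: R0 R1 Radd)

lemma DR: "a \<in> R \<Longrightarrow> D a \<in> R" using lnd unfolding lnd_on_def derivation_on_def by auto
lemma Dadd: "a\<in>R \<Longrightarrow> b\<in>R \<Longrightarrow> D (a+b) = D a + D b"
  using lnd unfolding lnd_on_def derivation_on_def by auto
lemma Dmult: "a\<in>R \<Longrightarrow> b\<in>R \<Longrightarrow> D (a*b) = a * D b + b * D a"
  using lnd unfolding lnd_on_def derivation_on_def by auto
lemma Dnil: "a \<in> R \<Longrightarrow> \<exists>k. (D^^k) a = 0"
  using lnd unfolding lnd_on_def by auto

lemma D0: "D 0 = 0"
  using Dadd[OF R0 R0] by simp
lemma D1: "D 1 = 0"
  using Dmult[OF R1 R1] by simp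
lemma Dminus: "a\<in>R \<Longrightarrow> D (-a) = - D a"
  using Dadd[of a "-a"] Rminus[of a] D0 by (simp add: eq_neg_iff_add_eq_0 add.commute)
lemma Ddiff: "a\<in>R \<Longrightarrow> b\<in>R \<Longrightarrow> D (a-b) = D a - D b"
  using Dadd[of a "-b"] Rminus[of b] Dminus[of b] by simp
lemma Dsum: "(\<And>i. i \<in> S \<Longrightarrow> f i \<in> R) \<Longrightarrow> D (sum f S) = sum (\<lambda>i. D (f i)) S"
proof (induction S rule: infinite_finite_induct)
  case (infinite A) then show ?case by (simp add: D0)
next
  case empty then show ?case by (simp add: D0)
next
  case (insert x F) then show ?case by (simp add: Dadd Rsum)
qed
lemma Dpow: "a\<in>R \<Longrightarrow> D (a^Suc k) = of_nat (Suc k) * a^k * D a"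
proof (induction k)
  case 0 then show ?case by simp
next
  case (Suc k)
  have "D (a^Suc (Suc k)) = D (a * a^Suc k)" by (simp only: power_Suc)
  also have "\<dots> = a * D (a^Suc k) + a^Suc k * D a" using Suc.prems Rpow by (simp only: Dmult)
  also have "\<dots> = a * (of_nat (Suc k) * a^k * D a) + a^Suc k * D a" using Suc by simp
  also have "\<dots> = of_nat (Suc (Suc k)) * a^Suc k * D a" by (simp add: algebra_simps)
  finally show ?case .
qed
lemma Dconst_mult: "c\<in>R \<Longrightarrow> D c = 0 \<Longrightarrow> a\<in>R \<Longrightarrow> D (c*a) = c * D a"
  using Dmult by simp

lemma Dn_Suc: "(D^^Suc k) a = (D^^k) (D a)"
  by (simp add: funpow_Suc_right del: funpow.simps)
lemma Dn_Suc2: "(D^^Suc k) a = D ((D^^k) a)" by simp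
lemma DnR: "a\<in>R \<Longrightarrow> (D^^k) a \<in> R"
  by (induction k) (auto simp: DR)
lemma Dn0: "(D^^k) 0 = 0"
  by (induction k) (auto simp: D0)
lemma Dnadd: "a\<in>R \<Longrightarrow> b\<in>R \<Longrightarrow> (D^^k) (a+b) = (D^^k) a + (D^^k) b"
  by (induction k) (auto simp: Dadd DnR)
lemma Dnminus: "a\<in>R \<Longrightarrow> (D^^k) (-a) = - (D^^k) a"
  by (induction k) (auto simp: Dminus DnR)
lemma Dndiff: "a\<in>R \<Longrightarrow> b\<in>R \<Longrightarrow> (D^^k) (a-b) = (D^^k) a - (D^^k) b"
  by (induction k) (auto simp: Ddiff DnR)
lemma Dnsum: "(\<And>i. i \<in> S \<Longrightarrow> f i \<in> R) \<Longrightarrow> (D^^k) (sum f S) = sum (\<lambda>i. (D^^k) (f i)) S"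
  by (induction k) (auto simp: Dsum DnR)
lemma Dnconst_mult: "c\<in>R \<Longrightarrow> D c = 0 \<Longrightarrow> a\<in>R \<Longrightarrow> (D^^k) (c*a) = c * (D^^k) a"
  by (induction k) (auto simp: Dconst_mult DnR)
lemma Dn_add_exp: "(D^^(i+j)) a = (D^^i) ((D^^j) a)"
  by (simp add: funpow_add)

definition nu :: "'b \<Rightarrow> nat" where
  "nu a = (LEAST k. (D^^Suc k) a = 0)"

lemma nu_ex: "a \<in> R \<Longrightarrow> \<exists>k. (D^^Suc k) a = 0"
proof -
  assume "a \<in> R"
  then obtain k where "(D^^k) a = 0" using Dnil by blast
  then have "(D^^Suc k) a = 0" by (simp add: D0)
  then show ?thesis by blast
qed

lemma nu_top: "a \<in> R \<Longrightarrow> (D^^Suc (nu a)) a = 0"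
  unfolding nu_def by (rule LeastI_ex, rule nu_ex)

lemma nu_least: "(D^^Suc k) a = 0 \<Longrightarrow> nu a \<le> k"
  unfolding nu_def by (rule Least_le)

lemma Dn_above: "a \<in> R \<Longrightarrow> nu a < k \<Longrightarrow> (D^^k) a = 0"
proof -
  assume a: "a \<in> R" and k: "nu a < k"
  define j where "j = k - Suc (nu a)"
  have j: "k = j + Suc (nu a)" using k unfolding j_def by arith
  show ?thesis unfolding j Dn_add_exp using nu_top[OF a] by (simp add: Dn0 del: funpow.simps)
qed

lemma lc_nz: "a \<in> R \<Longrightarrow> a \<noteq> 0 \<Longrightarrow> (D^^nu a) a \<noteq> 0"
proof (cases "nu a")
  case 0
  assume "a \<noteq> 0" then show ?thesis using 0 by simp
next
  case (Suc k)
  assume "a \<in> R"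
  show ?thesis
  proof
    assume "(D^^nu a) a = 0"
    then have "nu a \<le> k" using Suc by (intro nu_least) simp
    then show False using Suc by simp
  qed
qed

lemma Dn_below: "a \<in> R \<Longrightarrow> a \<noteq> 0 \<Longrightarrow> k \<le> nu a \<Longrightarrow> (D^^k) a \<noteq> 0"
proof
  assume a: "a \<in> R" "a \<noteq> 0" and k: "k \<le> nu a" and z: "(D^^k) a = 0"
  have e: "nu a = (nu a - k) + k" using k by arith
  have "(D^^nu a) a = (D^^(nu a - k)) ((D^^k) a)" by (subst e, rule Dn_add_exp)
  also have "\<dots> = 0" using z by (simp add: Dn0)
  finally show False using lc_nz[OF a] by simp
qed

lemma nu_eqI: "a \<in> R \<Longrightarrow> (D^^k) a \<noteq> 0 \<Longrightarrow> (D^^Suc k) a = 0 \<Longrightarrow> nu a = k"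
proof -
  assume a: "a \<in> R" and nz: "(D^^k) a \<noteq> 0" and z: "(D^^Suc k) a = 0"
  have "nu a \<le> k" using z by (rule nu_least)
  moreover have "\<not> nu a < k" using Dn_above[OF a] nz by blast
  ultimately show ?thesis by simp
qed

lemma nu_le_iff: "a \<in> R \<Longrightarrow> nu a \<le> k \<longleftrightarrow> (D^^Suc k) a = 0"
  using Dn_above[of a "Suc k"] nu_least by auto

lemma nu_zero_iff: "a \<in> R \<Longrightarrow> nu a = 0 \<longleftrightarrow> D a = 0"
  using nu_le_iff[of a 0] by simp

lemma lc_ker: "a \<in> R \<Longrightarrow> D ((D^^nu a) a) = 0"
  using nu_top by simp

lemma lcR: "a \<in> R \<Longrightarrow> (D^^nu a) a \<in> R" by (rule DnR)

lemma nu_D: "a \<in> R \<Longrightarrow> D a \<noteq> 0 \<Longrightarrow> nu (D a) = nu a - 1 \<and> 1 \<le> nu a"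
proof -
  assume a: "a \<in> R" and d: "D a \<noteq> 0"
  then have "nu a \<noteq> 0" using nu_zero_iff by blast
  then obtain k where k: "nu a = Suc k" by (cases "nu a") auto
  have "(D^^k) (D a) = (D^^nu a) a" using k by (simp only: Dn_Suc)
  then have "(D^^k) (D a) \<noteq> 0" using lc_nz[of a] a d D0 by auto
  moreover have "(D^^Suc k) (D a) = 0" using nu_top[OF a] k by (simp only: Dn_Suc[symmetric])
  ultimately have "nu (D a) = k" using DR[OF a] by (intro nu_eqI)
  then show ?thesis using k by simp
qed

lemma lc_D: "a \<in> R \<Longrightarrow> D a \<noteq> 0 \<Longrightarrow> (D^^nu (D a)) (D a) = (D^^nu a) a"
proof -
  assume a: "a \<in> R" and d: "D a \<noteq> 0"
  from nu_D[OF a d] have "nu a = Suc (nu (D a))" by simp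
  then show ?thesis by (simp only: Dn_Suc)
qed

lemma nu_ker: "c \<in> R \<Longrightarrow> D c = 0 \<Longrightarrow> nu c = 0"
  using nu_zero_iff by blast

lemma nu_0: "nu 0 = 0"
  using nu_ker[OF R0 D0] .

lemma nu_minus: "a \<in> R \<Longrightarrow> nu (-a) = nu a"
proof -
  assume a: "a \<in> R"
  have "\<And>k. nu (-a) \<le> k \<longleftrightarrow> nu a \<le> k"
    using nu_le_iff[OF a] nu_le_iff[OF Rminus[OF a]] Dnminus[OF a] by (simp del: funpow.simps)
  then show ?thesis by (meson antisym order_refl)
qed

lemma nu_add_le: "a \<in> R \<Longrightarrow> b \<in> R \<Longrightarrow> nu (a+b) \<le> max (nu a) (nu b)"
proof -
  assume a: "a \<in> R" and b: "b \<in> R"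
  have "(D^^Suc (max (nu a) (nu b))) (a+b) = 0"
    using Dnadd[OF a b] Dn_above[OF a, of "Suc (max (nu a) (nu b))"] Dn_above[OF b, of "Suc (max (nu a) (nu b))"]
    by (simp del: funpow.simps)
  then show ?thesis by (rule nu_least)
qed

lemma mult_top:
  "a \<in> R \<Longrightarrow> b \<in> R \<Longrightarrow> a \<noteq> 0 \<Longrightarrow> b \<noteq> 0 \<Longrightarrow> nu a + nu b = N \<Longrightarrow>
    (D^^N) (a*b) = of_nat (N choose nu a) * ((D^^nu a) a * (D^^nu b) b) \<and> (D^^Suc N) (a*b) = 0"
proof (induction N arbitrary: a b)
  case 0
  then have "D a = 0" "D b = 0" using nu_zero_iff by auto
  then have "D (a*b) = 0" using 0 Dmult by simp
  then show ?case using 0 by simp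
next
  case (Suc N)
  note ab = Suc.prems(1,2) and nz = Suc.prems(3,4)
  show ?case
  proof (cases "D a = 0")
    case True
    then have na: "nu a = 0" using nu_zero_iff ab by blast
    have "(D^^k) (a*b) = a * (D^^k) b" for k by (rule Dnconst_mult[OF ab(1) True ab(2)])
    then show ?thesis using Suc.prems na Dn_above[OF ab(2), of "Suc (Suc N)"] by (simp del: funpow.simps)
  next
    case Fa: False
    show ?thesis
    proof (cases "D b = 0")
      case True
      then have nb: "nu b = 0" using nu_zero_iff ab by blast
      have "(D^^k) (b*a) = b * (D^^k) a" for k by (rule Dnconst_mult[OF ab(2) True ab(1)])
      then show ?thesis using Suc.prems nb Dn_above[OF ab(1), of "Suc (Suc N)"] by (simp add: mult.commute del: funpow.simps)
    next
      case Fb: False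
      have da: "nu (D a) = nu a - 1" "1 \<le> nu a" using nu_D[OF ab(1) Fa] by auto
      have db: "nu (D b) = nu b - 1" "1 \<le> nu b" using nu_D[OF ab(2) Fb] by auto
      have I1: "(D^^N) (a*D b) = of_nat (N choose nu a) * ((D^^nu a) a * (D^^nu b) b) \<and> (D^^Suc N) (a*D b) = 0"
        using Suc.IH[OF ab(1) DR[OF ab(2)] nz(1) Fb] da db Suc.prems(5) lc_D[OF ab(2) Fb] by (simp del: funpow.simps)
      have I2: "(D^^N) (D a * b) = of_nat (N choose (nu a - 1)) * ((D^^nu a) a * (D^^nu b) b) \<and> (D^^Suc N) (D a * b) = 0"
        using Suc.IH[OF DR[OF ab(1)] ab(2) Fa nz(2)] da db Suc.prems(5) lc_D[OF ab(1) Fa] by (simp del: funpow.simps)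
      have eq: "D (a*b) = a * D b + D a * b" using Dmult[OF ab] by (simp add: mult.commute)
      have R1': "a * D b \<in> R" "D a * b \<in> R" using ab by (auto intro: Rmult DR)
      have "(D^^Suc N) (a*b) = (D^^N) (a * D b) + (D^^N) (D a * b)"
        by (simp only: Dn_Suc eq Dnadd[OF R1'])
      also have "\<dots> = of_nat (Suc N choose nu a) * ((D^^nu a) a * (D^^nu b) b)"
      proof -
        obtain p where p: "nu a = Suc p" using da(2) by (cases "nu a") auto
        have "Suc N choose nu a = (N choose nu a) + (N choose (nu a - 1))"
          using p by simp
        then show ?thesis using I1 I2 by (simp add: algebra_simps)
      qed
      finally have t1: "(D^^Suc N) (a*b) = of_nat (Suc N choose nu a) * ((D^^nu a) a * (D^^nu b) b)" .
      have "(D^^Suc (Suc N)) (a*b) = (D^^Suc N) (a * D b) + (D^^Suc N) (D a * b)"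
        by (simp only: Dn_Suc[of "Suc N"] eq Dnadd[OF R1'])
      also have "\<dots> = 0" using I1 I2 by (simp del: funpow.simps)
      finally show ?thesis using t1 by simp
    qed
  qed
qed

lemma nu_mult: "a \<in> R \<Longrightarrow> b \<in> R \<Longrightarrow> a \<noteq> 0 \<Longrightarrow> b \<noteq> 0 \<Longrightarrow> nu (a*b) = nu a + nu b"
proof -
  assume a: "a \<in> R" and b: "b \<in> R" and nz: "a \<noteq> 0" "b \<noteq> 0"
  from mult_top[OF a b nz refl] have t: "(D^^(nu a + nu b)) (a*b) = of_nat ((nu a + nu b) choose nu a) * ((D^^nu a) a * (D^^nu b) b)"
    and z: "(D^^Suc (nu a + nu b)) (a*b) = 0" by auto
  have "(D^^(nu a + nu b)) (a*b) \<noteq> 0"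
    unfolding t using lc_nz[OF a nz(1)] lc_nz[OF b nz(2)] by simp
  then show ?thesis using z Rmult[OF a b] by (intro nu_eqI)
qed

lemma nu_pow: "a \<in> R \<Longrightarrow> a \<noteq> 0 \<Longrightarrow> nu (a^k) = k * nu a"
  by (induction k) (simp_all add: nu_mult Rpow nu_ker R1 D1)

lemma nu_prod: "finite S \<Longrightarrow> (\<And>i. i \<in> S \<Longrightarrow> f i \<in> R \<and> f i \<noteq> 0) \<Longrightarrow> nu (prod f S) = (\<Sum>i\<in>S. nu (f i))"
proof (induction S rule: finite_induct)
  case empty then show ?case by (simp add: nu_ker R1 D1)
next
  case (insert x F)
  have "prod f F \<in> R" "prod f F \<noteq> 0" using insert by (auto intro: Rprod)
  then show ?case using insert by (simp add: nu_mult)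
qed

lemma nu_dvd: "dvdR R x w \<Longrightarrow> w \<noteq> 0 \<Longrightarrow> x \<in> R \<Longrightarrow> nu x \<le> nu w"
proof -
  assume "dvdR R x w" "w \<noteq> 0" "x \<in> R"
  then obtain q where q: "q \<in> R" "w = x * q" unfolding dvdR_def by auto
  then show ?thesis using \<open>w \<noteq> 0\<close> \<open>x \<in> R\<close> by (simp add: nu_mult)
qed

lemma unit_ker: "u \<in> R \<Longrightarrow> v \<in> R \<Longrightarrow> u * v = 1 \<Longrightarrow> D u = 0"
proof -
  assume u: "u \<in> R" and v: "v \<in> R" and uv: "u * v = 1"
  then have "u \<noteq> 0" "v \<noteq> 0" by auto
  then have "nu u + nu v = nu 1" using nu_mult[OF u v] uv by simp
  then have "nu u = 0" using nu_ker[OF R1 D1] by simp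
  then show ?thesis using nu_zero_iff[OF u] by simp
qed

lemma ker_fact: "a \<in> R \<Longrightarrow> b \<in> R \<Longrightarrow> a \<noteq> 0 \<Longrightarrow> b \<noteq> 0 \<Longrightarrow> D (a*b) = 0 \<Longrightarrow> D a = 0"
proof -
  assume a: "a \<in> R" and b: "b \<in> R" and nz: "a \<noteq> 0" "b \<noteq> 0" and d: "D (a*b) = 0"
  have "nu (a*b) = 0" using nu_ker[OF Rmult[OF a b] d] .
  then have "nu a = 0" using nu_mult[OF a b nz] by simp
  then show ?thesis using nu_zero_iff[OF a] by simp
qed

end

context lndR begin

lemma dvdR_refl: "x \<in> R \<Longrightarrow> dvdR R x x" unfolding dvdR_def using R1 by force
lemma dvdR_one: "w \<in> R \<Longrightarrow> dvdR R 1 w" unfolding dvdR_def by force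
lemma dvdR_0: "dvdR R x 0" unfolding dvdR_def using R0 by force
lemma dvdR_mult_right: "dvdR R x w \<Longrightarrow> v \<in> R \<Longrightarrow> dvdR R x (w*v)"
proof -
  assume "dvdR R x w" "v \<in> R"
  then obtain q where "q \<in> R" "w = x*q" unfolding dvdR_def by auto
  then show ?thesis unfolding dvdR_def using \<open>v \<in> R\<close> by (intro bexI[of _ "q*v"]) (auto simp: Rmult mult.assoc)
qed
lemma dvdR_mult_left: "dvdR R x w \<Longrightarrow> v \<in> R \<Longrightarrow> dvdR R x (v*w)"
  using dvdR_mult_right[of x w v] by (simp add: mult.commute)
lemma dvdR_trans: "dvdR R x y \<Longrightarrow> dvdR R y w \<Longrightarrow> dvdR R x w"
proof -
  assume "dvdR R x y" "dvdR R y w"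
  then obtain q q' where "q \<in> R" "y = x*q" "q' \<in> R" "w = y*q'" unfolding dvdR_def by auto
  then show ?thesis unfolding dvdR_def by (intro bexI[of _ "q*q'"]) (auto simp: Rmult mult.assoc)
qed
lemma dvdR_add: "dvdR R x a \<Longrightarrow> dvdR R x b \<Longrightarrow> dvdR R x (a+b)"
proof -
  assume "dvdR R x a" "dvdR R x b"
  then obtain q q' where "q \<in> R" "a = x*q" "q' \<in> R" "b = x*q'" unfolding dvdR_def by auto
  then show ?thesis unfolding dvdR_def by (intro bexI[of _ "q+q'"]) (auto simp: Radd distrib_left)
qed
lemma dvdR_minus: "dvdR R x a \<Longrightarrow> dvdR R x (-a)"
proof -
  assume "dvdR R x a"
  then obtain q where "q \<in> R" "a = x*q" unfolding dvdR_def by auto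
  then show ?thesis unfolding dvdR_def by (intro bexI[of _ "-q"]) (auto simp: Rminus)
qed
lemma dvdR_sum: "(\<And>i. i \<in> S \<Longrightarrow> dvdR R x (f i)) \<Longrightarrow> dvdR R x (sum f S)"
proof (induction S rule: infinite_finite_induct)
  case (infinite A) then show ?case by (simp add: dvdR_0)
next
  case empty then show ?case by (simp add: dvdR_0)
next
  case (insert y F) then show ?case by (simp add: dvdR_add)
qed
lemma dvdR_pow_le: "x \<in> R \<Longrightarrow> k \<le> a \<Longrightarrow> dvdR R (x^k) (x^a)"
  unfolding dvdR_def by (rule bexI[of _ "x^(a-k)"]) (auto simp: Rpow power_add[symmetric])

lemma rpD: "rpR R x y \<Longrightarrow> w \<in> R \<Longrightarrow> dvdR R x (y*w) \<Longrightarrow> dvdR R x w"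
  unfolding rpR_def by blast

lemma rp_pow_right: "rpR R x y \<Longrightarrow> y \<in> R \<Longrightarrow> rpR R x (y^b)"
proof (induction b)
  case 0 then show ?case unfolding rpR_def by simp
next
  case (Suc b)
  show ?case unfolding rpR_def
  proof (intro ballI impI)
    fix w assume w: "w \<in> R" and d: "dvdR R x (y ^ Suc b * w)"
    have "dvdR R x (y * (y^b * w))" using d by (simp add: mult.assoc)
    then have "dvdR R x (y^b * w)" using rpD[OF Suc.prems(1) Rmult[OF Rpow[OF Suc.prems(2)] w]] by simp
    then show "dvdR R x w" using rpD[OF Suc.IH[OF Suc.prems] w] by simp
  qed
qed

lemma rp_mult_right: "rpR R x y1 \<Longrightarrow> rpR R x y2 \<Longrightarrow> y1 \<in> R \<Longrightarrow> y2 \<in> R \<Longrightarrow> rpR R x (y1*y2)"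
proof -
  assume r1: "rpR R x y1" and r2: "rpR R x y2" and y: "y1 \<in> R" "y2 \<in> R"
  show ?thesis unfolding rpR_def
  proof (intro ballI impI)
    fix w assume w: "w \<in> R" and d: "dvdR R x (y1 * y2 * w)"
    then have "dvdR R x (y1 * (y2 * w))" by (simp add: mult.assoc)
    then have "dvdR R x (y2 * w)" using rpD[OF r1 Rmult[OF y(2) w]] by simp
    then show "dvdR R x w" using rpD[OF r2 w] by simp
  qed
qed

lemma rp_one: "rpR R x 1"
  unfolding rpR_def by simp

lemma rp_pow_left: "rpR R x y \<Longrightarrow> x \<in> R \<Longrightarrow> x \<noteq> 0 \<Longrightarrow> y \<in> R \<Longrightarrow> rpR R (x^a) y"
proof (induction a)
  case 0 then show ?case unfolding rpR_def using dvdR_one by simp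
next
  case (Suc a)
  show ?case unfolding rpR_def
  proof (intro ballI impI)
    fix w assume w: "w \<in> R" and d: "dvdR R (x ^ Suc a) (y * w)"
    then obtain q where q: "q \<in> R" "y * w = x ^ Suc a * q" unfolding dvdR_def by auto
    have "dvdR R x (y * w)" unfolding dvdR_def using q Suc.prems(2) by (intro bexI[of _ "x^a * q"]) (auto intro: Rmult Rpow)
    then have "dvdR R x w" using rpD[OF Suc.prems(1) w] by simp
    then obtain w1 where w1: "w1 \<in> R" "w = x * w1" unfolding dvdR_def by blast
    have "x * (y * w1) = x * (x^a * q)" using q w1 by (simp add: algebra_simps)
    then have "y * w1 = x^a * q" using Suc.prems(3) by simp
    then have "dvdR R (x^a) (y * w1)" unfolding dvdR_def using q by blast
    then have "dvdR R (x^a) w1" using rpD[OF Suc.IH[OF Suc.prems] w1(1)] by simp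
    then obtain q' where "q' \<in> R" "w1 = x^a * q'" unfolding dvdR_def by blast
    then show "dvdR R (x ^ Suc a) w" unfolding dvdR_def using w1 by (intro bexI[of _ q']) auto
  qed
qed

lemma dvd_mult_rp: "dvdR R X W \<Longrightarrow> dvdR R Y W \<Longrightarrow> rpR R X Y \<Longrightarrow> dvdR R (X*Y) W"
proof -
  assume dX: "dvdR R X W" and dY: "dvdR R Y W" and rp: "rpR R X Y"
  obtain q where q: "q \<in> R" "W = Y * q" using dY unfolding dvdR_def by auto
  have "dvdR R X q" using rpD[OF rp q(1)] q(2) dX by simp
  then obtain q' where "q' \<in> R" "q = X * q'" unfolding dvdR_def by auto
  then show ?thesis unfolding dvdR_def using q by (intro bexI[of _ q']) (auto simp: algebra_simps)
qed

lemma rp_prod_right: "finite S \<Longrightarrow> (\<And>j. j \<in> S \<Longrightarrow> rpR R x (P j) \<and> P j \<in> R) \<Longrightarrow> rpR R x (prod P S)"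
proof (induction S rule: finite_induct)
  case empty then show ?case by (simp add: rp_one)
next
  case (insert y F) then show ?case by (simp add: rp_mult_right Rprod)
qed

lemma dvd_prod_rp:
  "finite S \<Longrightarrow> (\<And>i. i \<in> S \<Longrightarrow> P i \<in> R \<and> dvdR R (P i) W) \<Longrightarrow>
   (\<And>i j. i \<in> S \<Longrightarrow> j \<in> S \<Longrightarrow> i \<noteq> j \<Longrightarrow> rpR R (P i) (P j)) \<Longrightarrow> W \<in> R \<Longrightarrow> dvdR R (prod P S) W"
proof (induction S rule: finite_induct)
  case empty then show ?case by (simp add: dvdR_one)
next
  case (insert y F)
  have "rpR R (P y) (prod P F)"
    using insert by (intro rp_prod_right) auto
  moreover have "dvdR R (prod P F) W" using insert by auto
  ultimately show ?case using insert dvd_mult_rp by simp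
qed

lemma dvd_Dn_pow: "x \<in> R \<Longrightarrow> k \<le> a \<Longrightarrow> dvdR R (x^(a-k)) ((D^^k) (x^a))"
proof (induction k)
  case 0 then show ?case using dvdR_refl Rpow by simp
next
  case (Suc k)
  then obtain q where q: "q \<in> R" "(D^^k) (x^a) = x^(a-k) * q" unfolding dvdR_def by auto
  define r where "r = a - Suc k"
  have r: "a - k = Suc r" using Suc.prems unfolding r_def by arith
  have ar: "a - Suc k = r" using r by simp
  have "(D^^Suc k) (x^a) = D (x^Suc r * q)" using q r by simp
  also have "\<dots> = x^Suc r * D q + q * (of_nat (Suc r) * x^r * D x)"
    using Suc.prems q by (simp add: Dmult Rpow Dpow del: power_Suc)
  also have "\<dots> = x^r * (x * D q + q * of_nat (Suc r) * D x)" by (simp add: algebra_simps)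
  finally show ?case unfolding ar dvdR_def using q Suc.prems
    by (intro bexI[of _ "x * D q + q * of_nat (Suc r) * D x"]) (auto intro!: Radd Rmult DR Rof_nat R1)
qed

lemma dvd_Dn_pow': "x \<in> R \<Longrightarrow> k \<le> K \<Longrightarrow> dvdR R (x^(a-K)) ((D^^k) (x^a))"
proof -
  assume x: "x \<in> R" and k: "k \<le> K"
  show ?thesis
  proof (cases "k \<le> a")
    case True
    then have "dvdR R (x^(a-K)) (x^(a-k))" using x k by (intro dvdR_pow_le) auto
    then show ?thesis using dvd_Dn_pow[OF x True] dvdR_trans by blast
  next
    case False
    then have "a - K = 0" using k by simp
    then show ?thesis using dvdR_one DnR Rpow x by simp
  qed
qed

lemma nu_Dn: "a \<in> R \<Longrightarrow> a \<noteq> 0 \<Longrightarrow> k \<le> nu a \<Longrightarrow> nu ((D^^k) a) = nu a - k"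
proof -
  assume a: "a \<in> R" "a \<noteq> 0" and k: "k \<le> nu a"
  have e1: "nu a = (nu a - k) + k" using k by arith
  have e2: "Suc (nu a) = Suc (nu a - k) + k" using k by arith
  have "(D^^(nu a - k)) ((D^^k) a) = (D^^nu a) a" by (subst e1, rule Dn_add_exp[symmetric])
  then have "(D^^(nu a - k)) ((D^^k) a) \<noteq> 0" using lc_nz[OF a] by simp
  moreover have "(D^^Suc (nu a - k)) ((D^^k) a) = (D^^Suc (nu a)) a"
    by (subst e2, rule Dn_add_exp[symmetric])
  ultimately show ?thesis using nu_top[OF a(1)] DnR[OF a(1)] by (intro nu_eqI) auto
qed

lemma ratio_nu: "f \<in> R \<Longrightarrow> h \<in> R \<Longrightarrow> f \<noteq> 0 \<Longrightarrow> h \<noteq> 0 \<Longrightarrow> f * D h = h * D f \<Longrightarrow> nu f = nu h"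
proof (induction "nu f" arbitrary: f h rule: less_induct)
  case less
  note fh = less.prems(1,2) and nz = less.prems(3,4) and eq = less.prems(5)
  show ?case
  proof (cases "D f = 0")
    case True
    then have "D h = 0" using eq nz by simp
    then have "nu h = 0" using nu_zero_iff[OF fh(2)] by simp
    moreover have "nu f = 0" using True nu_zero_iff[OF fh(1)] by simp
    ultimately show ?thesis by simp
  next
    case Ff: False
    show ?thesis
    proof (cases "D h = 0")
      case True
      then have "D f = 0" using eq nz by simp
      then show ?thesis using Ff by simp
    next
      case Fh: False
      have "D (f * D h) = D (h * D f)" using eq by simp
      then have "f * D (D h) + D h * D f = h * D (D f) + D f * D h"
        using fh by (simp add: Dmult DR)
      then have e2: "f * D (D h) = h * D (D f)" by (simp add: mult.commute)
      have "f * (D f * D (D h)) = f * (D h * D (D f))"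
      proof -
        have "f * (D f * D (D h)) = D f * (f * D (D h))" by (simp add: algebra_simps)
        also have "\<dots> = D f * (h * D (D f))" using e2 by simp
        also have "\<dots> = (h * D f) * D (D f)" by (simp add: algebra_simps)
        also have "\<dots> = (f * D h) * D (D f)" using eq by simp
        finally show ?thesis by (simp add: algebra_simps)
      qed
      then have e3: "D f * D (D h) = D h * D (D f)" using nz by simp
      have nf: "nu (D f) = nu f - 1" "1 \<le> nu f" using nu_D[OF fh(1) Ff] by auto
      have nh: "nu (D h) = nu h - 1" "1 \<le> nu h" using nu_D[OF fh(2) Fh] by auto
      have "nu (D f) = nu (D h)"
        using less.hyps[of "D f" "D h"] nf e3 Ff Fh DR fh by simp
      then show ?thesis using nf nh by simp
    qed
  qed
qed

lemma ratio_const: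
  assumes f: "f \<in> R" "f \<noteq> 0" and g: "g \<in> R" and eq: "f * D g = g * D f"
  shows "(D^^nu f) f * g = (D^^nu f) g * f" "D ((D^^nu f) g) = 0"
proof -
  define k where "k = nu f"
  define \<alpha> where "\<alpha> = (D^^k) f"
  define \<beta> where "\<beta> = (D^^k) g"
  have aR: "\<alpha> \<in> R" and bR: "\<beta> \<in> R" unfolding \<alpha>_def \<beta>_def using f g DnR by auto
  have Da: "D \<alpha> = 0" unfolding \<alpha>_def k_def using lc_ker f by simp
  have Db: "D \<beta> = 0"
  proof (cases "g = 0")
    case True then show ?thesis unfolding \<beta>_def by (simp add: Dn0 D0)
  next
    case False
    then have "nu g = k" using ratio_nu[OF f(1) g f(2) False eq] k_def by simp
    then show ?thesis unfolding \<beta>_def using nu_top[OF g] by simp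
  qed
  define h where "h = \<alpha> * g - \<beta> * f"
  have hR: "h \<in> R" unfolding h_def using aR bR f g by (auto intro!: Rdiff Rmult)
  have Dh: "D h = \<alpha> * D g - \<beta> * D f"
    unfolding h_def using aR bR f g Da Db by (simp add: Ddiff Rmult Dconst_mult)
  have "f * D h = \<alpha> * (f * D g) - \<beta> * (f * D f)" unfolding Dh by (simp add: algebra_simps)
  also have "\<dots> = \<alpha> * (g * D f) - \<beta> * (f * D f)" using eq by simp
  also have "\<dots> = h * D f" unfolding h_def by (simp add: algebra_simps)
  finally have eqh: "f * D h = h * D f" .
  have "(D^^k) h = (D^^k) (\<alpha>*g) - (D^^k) (\<beta>*f)" unfolding h_def
    using aR bR f g by (intro Dndiff Rmult)
  also have "\<dots> = \<alpha> * (D^^k) g - \<beta> * (D^^k) f"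
    using aR bR f g Da Db Dnconst_mult by simp
  also have "\<dots> = 0" unfolding \<alpha>_def \<beta>_def by (simp add: mult.commute)
  finally have Dkh: "(D^^k) h = 0" .
  have "h = 0"
  proof (rule ccontr)
    assume hnz: "h \<noteq> 0"
    then have "nu h = k" using ratio_nu[OF f(1) hR f(2) hnz eqh] k_def by simp
    then show False using lc_nz[OF hR hnz] Dkh by simp
  qed
  then show "(D^^nu f) f * g = (D^^nu f) g * f" unfolding h_def \<alpha>_def \<beta>_def k_def by simp
  show "D ((D^^nu f) g) = 0" using Db unfolding \<beta>_def k_def .
qed

end

lemma det_row_lin:
  fixes F :: "nat \<Rightarrow> nat \<Rightarrow> 'a::comm_ring_1"
  assumes l: "l < n" and S: "finite S"
  shows "det (mat n n (\<lambda>(j,i). if j = l then (\<Sum>s\<in>S. c s * h s i) else F j i)) =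
         (\<Sum>s\<in>S. c s * det (mat n n (\<lambda>(j,i). if j = l then h s i else F j i)))"
proof -
  let ?A = "mat n n (\<lambda>(j,i). if j = l then (\<Sum>s\<in>S. c s * h s i) else F j i)"
  let ?B = "\<lambda>s. mat n n (\<lambda>(j,i). if j = l then h s i else F j i)"
  have A: "?A \<in> carrier_mat n n" by simp
  have B: "?B s \<in> carrier_mat n n" for s by simp
  have key: "(\<Prod>j = 0..<n. ?A $$ (j, p j)) = (\<Sum>s\<in>S. c s * (\<Prod>j = 0..<n. ?B s $$ (j, p j)))"
    if p: "p permutes {0..<n}" for p
  proof -
    have pj: "j < n \<Longrightarrow> p j < n" for j using permutes_in_image[OF p] by simp
    have lS: "l \<in> {0..<n}" using l by simp
    have rest: "(\<Prod>j\<in>{0..<n} - {l}. ?A $$ (j, p j)) = (\<Prod>j\<in>{0..<n} - {l}. F j (p j))"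
      by (rule prod.cong) (auto simp: pj)
    have restB: "(\<Prod>j\<in>{0..<n} - {l}. ?B s $$ (j, p j)) = (\<Prod>j\<in>{0..<n} - {l}. F j (p j))" for s
      by (rule prod.cong) (auto simp: pj)
    have "(\<Prod>j = 0..<n. ?A $$ (j, p j)) = ?A $$ (l, p l) * (\<Prod>j\<in>{0..<n} - {l}. ?A $$ (j, p j))"
      by (rule prod.remove[OF _ lS]) simp
    also have "\<dots> = (\<Sum>s\<in>S. c s * h s (p l)) * (\<Prod>j\<in>{0..<n} - {l}. F j (p j))"
      using l pj[OF l] rest by simp
    also have "\<dots> = (\<Sum>s\<in>S. c s * (h s (p l) * (\<Prod>j\<in>{0..<n} - {l}. F j (p j))))"
      by (simp add: sum_distrib_right mult.assoc)
    also have "\<dots> = (\<Sum>s\<in>S. c s * (\<Prod>j = 0..<n. ?B s $$ (j, p j)))"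
    proof (rule sum.cong[OF refl])
      fix s
      have "(\<Prod>j = 0..<n. ?B s $$ (j, p j)) = ?B s $$ (l, p l) * (\<Prod>j\<in>{0..<n} - {l}. ?B s $$ (j, p j))"
        by (rule prod.remove[OF _ lS]) simp
      also have "\<dots> = h s (p l) * (\<Prod>j\<in>{0..<n} - {l}. F j (p j))"
        using l pj[OF l] restB by simp
      finally show "c s * (h s (p l) * (\<Prod>j\<in>{0..<n} - {l}. F j (p j))) = c s * (\<Prod>j = 0..<n. ?B s $$ (j, p j))"
        by simp
    qed
    finally show ?thesis .
  qed
  have "det ?A = (\<Sum>p\<in>{p. p permutes {0..<n}}. signof p * (\<Prod>j = 0..<n. ?A $$ (j, p j)))"
    by (rule det_def'[OF A])
  also have "\<dots> = (\<Sum>p\<in>{p. p permutes {0..<n}}. (\<Sum>s\<in>S. c s * (signof p * (\<Prod>j = 0..<n. ?B s $$ (j, p j)))))"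
  proof (rule sum.cong[OF refl])
    fix p assume "p \<in> {p. p permutes {0..<n}}"
    then have p: "p permutes {0..<n}" by simp
    show "signof p * (\<Prod>j = 0..<n. ?A $$ (j, p j)) = (\<Sum>s\<in>S. c s * (signof p * (\<Prod>j = 0..<n. ?B s $$ (j, p j))))"
      by (subst key[OF p]) (simp only: sum_distrib_left mult.left_commute)
  qed
  also have "\<dots> = (\<Sum>s\<in>S. (\<Sum>p\<in>{p. p permutes {0..<n}}. c s * (signof p * (\<Prod>j = 0..<n. ?B s $$ (j, p j)))))"
    by (rule sum.swap)
  also have "\<dots> = (\<Sum>s\<in>S. c s * det (?B s))"
    by (rule sum.cong[OF refl]) (simp add: det_def'[OF B] sum_distrib_left)
  finally show ?thesis .
qed

context lndR begin

definition wr_mat :: "nat \<Rightarrow> (nat \<Rightarrow> 'b) \<Rightarrow> 'b mat" where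
  "wr_mat m g = mat m m (\<lambda>(j,i). (D^^i) (g j))"
definition W :: "nat \<Rightarrow> (nat \<Rightarrow> 'b) \<Rightarrow> 'b" where
  "W m g = det (wr_mat m g)"

lemma wr_carrier: "wr_mat m g \<in> carrier_mat m m" unfolding wr_mat_def by simp
lemma wr_index: "j < m \<Longrightarrow> i < m \<Longrightarrow> wr_mat m g $$ (j,i) = (D^^i) (g j)" unfolding wr_mat_def by simp

lemma det_R:
  assumes A: "A \<in> carrier_mat n n" and e: "\<And>i j. i < n \<Longrightarrow> j < n \<Longrightarrow> A $$ (i,j) \<in> R"
  shows "det A \<in> R"
proof -
  have "(signof p * (\<Prod>i = 0..<n. A $$ (i, p i))) \<in> R" if p: "p permutes {0..<n}" for p
  proof -
    have "(\<Prod>i = 0..<n. A $$ (i, p i)) \<in> R"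
      using e permutes_in_image[OF p] by (intro Rprod) auto
    then show ?thesis using Rsignof Rmult by blast
  qed
  then show ?thesis unfolding det_def'[OF A] by (intro Rsum) auto
qed

lemma W_R: "(\<And>j. j < m \<Longrightarrow> g j \<in> R) \<Longrightarrow> W m g \<in> R"
  unfolding W_def by (rule det_R[OF wr_carrier]) (simp add: wr_index DnR)

lemma det_dvd_row:
  assumes A: "A \<in> carrier_mat n n" and e: "\<And>i j. i < n \<Longrightarrow> j < n \<Longrightarrow> A $$ (i,j) \<in> R"
    and k: "k < n" and dv: "\<And>i. i < n \<Longrightarrow> dvdR R x (A $$ (k,i))"
  shows "dvdR R x (det A)"
proof -
  have "dvdR R x (signof p * (\<Prod>i = 0..<n. A $$ (i, p i)))" if p: "p permutes {0..<n}" for p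
  proof -
    have kS: "k \<in> {0..<n}" using k by simp
    have pj: "j < n \<Longrightarrow> p j < n" for j using permutes_in_image[OF p] by simp
    have "(\<Prod>i = 0..<n. A $$ (i, p i)) = A $$ (k, p k) * (\<Prod>i\<in>{0..<n} - {k}. A $$ (i, p i))"
      by (rule prod.remove[OF _ kS]) simp
    moreover have "dvdR R x (A $$ (k, p k))" using dv pj k by auto
    moreover have "(\<Prod>i\<in>{0..<n} - {k}. A $$ (i, p i)) \<in> R" using e pj by (intro Rprod) auto
    ultimately have "dvdR R x (\<Prod>i = 0..<n. A $$ (i, p i))" using dvdR_mult_right by simp
    then show ?thesis using dvdR_mult_left Rsignof by blast
  qed
  then show ?thesis unfolding det_def'[OF A] by (intro dvdR_sum) auto
qed

lemma W_dvd:
  assumes g: "\<And>j. j < m \<Longrightarrow> g j \<in> R" and k: "k < m" and dv: "\<And>i. i < m \<Longrightarrow> dvdR R x ((D^^i) (g k))"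
  shows "dvdR R x (W m g)"
  unfolding W_def using wr_carrier k dv g by (intro det_dvd_row) (auto simp: wr_index DnR)

lemma nu_sum_bound:
  "finite S \<Longrightarrow> (\<And>s. s \<in> S \<Longrightarrow> f s \<in> R \<and> (f s = 0 \<or> nu (f s) + T \<le> B)) \<Longrightarrow>
    sum f S = 0 \<or> nu (sum f S) + T \<le> B"
proof (induction S rule: finite_induct)
  case empty then show ?case by simp
next
  case (insert x F)
  have fx: "f x \<in> R" "f x = 0 \<or> nu (f x) + T \<le> B" using insert by auto
  have sF: "sum f F \<in> R" using insert by (auto intro: Rsum)
  have IH: "sum f F = 0 \<or> nu (sum f F) + T \<le> B" using insert by auto
  show ?case
  proof (cases "f x = 0")
    case True then show ?thesis using IH insert by simp
  next
    case False
    show ?thesis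
    proof (cases "sum f F = 0")
      case True then show ?thesis using fx insert by simp
    next
      case False2: False
      have "nu (f x + sum f F) \<le> max (nu (f x)) (nu (sum f F))" by (rule nu_add_le[OF fx(1) sF])
      then show ?thesis using fx False IH False2 insert by auto
    qed
  qed
qed

lemma W_nu:
  assumes g: "\<And>j. j < m \<Longrightarrow> g j \<in> R" and nz: "W m g \<noteq> 0"
  shows "nu (W m g) + (\<Sum>i<m. i) \<le> (\<Sum>j<m. nu (g j))"
proof -
  let ?S = "\<Sum>j<m. nu (g j)"
  let ?T = "\<Sum>i<m. i"
  have trm: "signof p * (\<Prod>j = 0..<m. wr_mat m g $$ (j, p j)) \<in> R \<and>
     (signof p * (\<Prod>j = 0..<m. wr_mat m g $$ (j, p j)) = 0 \<or>
      nu (signof p * (\<Prod>j = 0..<m. wr_mat m g $$ (j, p j))) + ?T \<le> ?S)"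
    if p: "p permutes {0..<m}" for p
  proof -
    have pj: "j < m \<Longrightarrow> p j < m" for j using permutes_in_image[OF p] by simp
    have P: "(\<Prod>j = 0..<m. wr_mat m g $$ (j, p j)) = (\<Prod>j = 0..<m. (D^^(p j)) (g j))"
      by (rule prod.cong) (auto simp: wr_index pj)
    have PR: "(\<Prod>j = 0..<m. (D^^(p j)) (g j)) \<in> R" using g by (intro Rprod) (auto intro: DnR)
    have sR: "signof p * (\<Prod>j = 0..<m. (D^^(p j)) (g j)) \<in> R" using PR Rsignof Rmult by blast
    have nuP: "(\<Prod>j = 0..<m. (D^^(p j)) (g j)) = 0 \<or> nu (\<Prod>j = 0..<m. (D^^(p j)) (g j)) + ?T \<le> ?S"
    proof (cases "(\<Prod>j = 0..<m. (D^^(p j)) (g j)) = 0")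
      case True then show ?thesis by simp
    next
      case False
      then have fnz: "(D^^(p j)) (g j) \<noteq> 0" if "j < m" for j using that by auto
      have gnz: "g j \<noteq> 0" if "j < m" for j using fnz[OF that] Dn0 by auto
      have ple: "p j \<le> nu (g j)" if "j < m" for j
        using fnz[OF that] Dn_above[OF g[OF that], of "p j"] by (meson not_le)
      have "nu (\<Prod>j = 0..<m. (D^^(p j)) (g j)) = (\<Sum>j = 0..<m. nu ((D^^(p j)) (g j)))"
        using fnz g by (intro nu_prod) (auto intro: DnR)
      also have "\<dots> = (\<Sum>j = 0..<m. nu (g j) - p j)"
        by (rule sum.cong[OF refl]) (simp add: nu_Dn g gnz ple)
      finally have e1: "nu (\<Prod>j = 0..<m. (D^^(p j)) (g j)) = (\<Sum>j = 0..<m. nu (g j) - p j)" .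
      have e2: "(\<Sum>j = 0..<m. p j) = (\<Sum>j = 0..<m. j)"
        using sum.permute[OF p, of "\<lambda>j. j"] by (simp add: comp_def)
      have "(\<Sum>j = 0..<m. nu (g j) - p j) + (\<Sum>j = 0..<m. p j) = (\<Sum>j = 0..<m. (nu (g j) - p j) + p j)"
        by (simp add: sum.distrib)
      also have "\<dots> = (\<Sum>j = 0..<m. nu (g j))" by (rule sum.cong[OF refl]) (simp add: ple)
      finally show ?thesis using e1 e2 by (simp add: atLeast0LessThan)
    qed
    have nus: "nu (signof p * (\<Prod>j = 0..<m. (D^^(p j)) (g j))) = nu (\<Prod>j = 0..<m. (D^^(p j)) (g j))"
    proof -
      have "sign p = (1::int) \<or> sign p = -1" by (simp add: sign_def)
      then show ?thesis using nu_minus[OF PR] by auto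
    qed
    show ?thesis unfolding P using sR nuP nus by auto
  qed
  have "W m g = 0 \<or> nu (W m g) + ?T \<le> ?S"
    unfolding W_def det_def'[OF wr_carrier] by (rule nu_sum_bound[OF finite_permutations[OF finite_atLeastLessThan]]) (use trm in auto)
  then show ?thesis using nz by simp
qed

end

context lndR begin

definition indep :: "nat \<Rightarrow> (nat \<Rightarrow> 'b) \<Rightarrow> bool" where
  "indep m g \<longleftrightarrow> (\<forall>c. (\<forall>j<m. c j \<in> R \<and> D (c j) = 0) \<and> (\<Sum>j<m. c j * g j) = 0 \<longrightarrow> (\<forall>j<m. c j = 0))"

lemma indep_less: assumes I: "indep (Suc m) g" shows "indep m g"
  unfolding indep_def
proof (rule allI, rule impI)
  fix c assume H: "(\<forall>j<m. c j \<in> R \<and> D (c j) = 0) \<and> (\<Sum>j<m. c j * g j) = 0"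
  define c' where "c' j = (if j < m then c j else 0)" for j
  have "(\<forall>j<Suc m. c' j \<in> R \<and> D (c' j) = 0)" using H R0 D0 unfolding c'_def by auto
  moreover have "(\<Sum>j<Suc m. c' j * g j) = 0" using H unfolding c'_def by simp
  ultimately have A: "\<forall>j<Suc m. c' j = 0" using I unfolding indep_def by blast
  show "\<forall>j<m. c j = 0"
  proof (intro allI impI)
    fix j assume j: "j < m"
    then have "c' j = 0" using A by simp
    then show "c j = 0" using j unfolding c'_def by simp
  qed
qed

lemma mat_delete_R:
  assumes A: "A \<in> carrier_mat n n" and e: "\<And>i j. i < n \<Longrightarrow> j < n \<Longrightarrow> A $$ (i,j) \<in> R"
  shows "det (mat_delete A a b) \<in> R"
proof (rule det_R)
  show "mat_delete A a b \<in> carrier_mat (n-1) (n-1)" using mat_delete_carrier[OF A] .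
  fix i j assume "i < n - 1" "j < n - 1"
  then show "mat_delete A a b $$ (i, j) \<in> R" unfolding mat_delete_def using A e by auto
qed

lemma W_nz: "(\<And>j. j < m \<Longrightarrow> g j \<in> R) \<Longrightarrow> indep m g \<Longrightarrow> W m g \<noteq> 0"
proof (induction m)
  case 0
  show ?case unfolding W_def using wr_carrier[of 0 g] by simp
next
  case (Suc m)
  have gR: "\<And>j. j < Suc m \<Longrightarrow> g j \<in> R" using Suc.prems by auto
  have Wm: "W m g \<noteq> 0" using Suc.IH Suc.prems indep_less by auto
  show ?case
  proof
    assume W0: "W (Suc m) g = 0"
    let ?M = "wr_mat (Suc m) g"
    have M: "?M \<in> carrier_mat (Suc m) (Suc m)" by (rule wr_carrier)
    have eR: "\<And>i j. i < Suc m \<Longrightarrow> j < Suc m \<Longrightarrow> ?M $$ (i,j) \<in> R"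
      using gR by (simp add: wr_index DnR)
    define v where "v j = cofactor ?M j m" for j
    have vR: "v j \<in> R" for j
    proof -
      have "((-1)::'b)^(j+m) \<in> R" using Rpow Rminus R1 by blast
      then show ?thesis unfolding v_def cofactor_def using mat_delete_R[OF M eR] Rmult by blast
    qed
    have vm: "v m = W m g"
    proof -
      have "mat_delete ?M m m = wr_mat m g"
        by (rule eq_matI) (auto simp: mat_delete_def wr_mat_def)
      then show ?thesis unfolding v_def cofactor_def W_def by simp
    qed
    have vmnz: "v m \<noteq> 0" using vm Wm by simp
    have eqs: "(\<Sum>j<Suc m. v j * (D^^k) (g j)) = 0" if k: "k \<le> m" for k
    proof -
      have "adj_mat ?M * ?M = det ?M \<cdot>\<^sub>m 1\<^sub>m (Suc m)" by (rule adj_mat(3)[OF M])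
      then have "(adj_mat ?M * ?M) $$ (m, k) = (det ?M \<cdot>\<^sub>m 1\<^sub>m (Suc m)) $$ (m, k)" by simp
      moreover have "(det ?M \<cdot>\<^sub>m 1\<^sub>m (Suc m)) $$ (m, k) = 0" using W0 k unfolding W_def by simp
      moreover have "(adj_mat ?M * ?M) $$ (m, k) = (\<Sum>j<Suc m. v j * (D^^k) (g j))"
        using k adj_mat(1)[OF M] M
        by (simp add: scalar_prod_def adj_mat_def v_def wr_index atLeast0LessThan)
      ultimately show ?thesis by simp
    qed
    have eqsD: "(\<Sum>j<Suc m. D (v j) * (D^^k) (g j)) = 0" if k: "k < m" for k
    proof -
      have "0 = D (\<Sum>j<Suc m. v j * (D^^k) (g j))" using eqs[of k] k D0 by simp
      also have "\<dots> = (\<Sum>j<Suc m. D (v j * (D^^k) (g j)))"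
        using vR gR by (intro Dsum) (auto intro: Rmult DnR)
      also have "\<dots> = (\<Sum>j<Suc m. v j * (D^^Suc k) (g j) + D (v j) * (D^^k) (g j))"
        using vR gR by (intro sum.cong[OF refl]) (simp add: Dmult DnR mult.commute)
      also have "\<dots> = (\<Sum>j<Suc m. v j * (D^^Suc k) (g j)) + (\<Sum>j<Suc m. D (v j) * (D^^k) (g j))"
        by (rule sum.distrib)
      also have "(\<Sum>j<Suc m. v j * (D^^Suc k) (g j)) = 0" using eqs[of "Suc k"] k by simp
      finally show ?thesis by simp
    qed
    define u where "u j = v m * D (v j) - D (v m) * v j" for j
    have um: "u m = 0" unfolding u_def by (simp add: mult.commute)
    have ueq: "(\<Sum>j<m. u j * (D^^k) (g j)) = 0" if k: "k < m" for k
    proof -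
      have "(\<Sum>j<Suc m. u j * (D^^k) (g j)) = v m * (\<Sum>j<Suc m. D (v j) * (D^^k) (g j)) - D (v m) * (\<Sum>j<Suc m. v j * (D^^k) (g j))"
        unfolding u_def by (simp add: sum_distrib_left sum_subtractf algebra_simps)
      also have "\<dots> = 0" using eqs[of k] eqsD[OF k] k by simp
      finally show ?thesis using um by simp
    qed
    have u0: "u l = 0" if l: "l < m" for l
    proof -
      let ?N = "wr_mat m g"
      have N: "?N \<in> carrier_mat m m" by (rule wr_carrier)
      have A1: "?N * adj_mat ?N = det ?N \<cdot>\<^sub>m 1\<^sub>m m" by (rule adj_mat(2)[OF N])
      have adjc: "adj_mat ?N \<in> carrier_mat m m" by (rule adj_mat(1)[OF N])
      have ent: "(\<Sum>k<m. ?N $$ (j,k) * adj_mat ?N $$ (k,l)) = (if j = l then det ?N else 0)" if j: "j < m" for j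
      proof -
        have "(?N * adj_mat ?N) $$ (j,l) = (\<Sum>k<m. ?N $$ (j,k) * adj_mat ?N $$ (k,l))"
          using j l N adjc by (simp add: scalar_prod_def atLeast0LessThan)
        then show ?thesis using A1 j l by (cases "j = l") auto
      qed
      have "(\<Sum>j<m. u j * (if j = l then det ?N else 0)) = (\<Sum>j<m. if j = l then u j * det ?N else 0)"
        by (rule sum.cong) auto
      also have "\<dots> = u l * det ?N" using l by (simp add: sum.delta)
      finally have "u l * det ?N = (\<Sum>j<m. u j * (if j = l then det ?N else 0))" by simp
      also have "\<dots> = (\<Sum>j<m. u j * (\<Sum>k<m. ?N $$ (j,k) * adj_mat ?N $$ (k,l)))"
        by (rule sum.cong[OF refl]) (simp add: ent)
      also have "\<dots> = (\<Sum>j<m. \<Sum>k<m. u j * (?N $$ (j,k) * adj_mat ?N $$ (k,l)))"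
        by (simp only: sum_distrib_left)
      also have "\<dots> = (\<Sum>k<m. \<Sum>j<m. u j * (?N $$ (j,k) * adj_mat ?N $$ (k,l)))"
        by (rule sum.swap)
      also have "\<dots> = (\<Sum>k<m. (\<Sum>j<m. u j * ?N $$ (j,k)) * adj_mat ?N $$ (k,l))"
        by (simp only: sum_distrib_right mult.assoc)
      also have "\<dots> = 0"
      proof (rule sum.neutral, rule ballI)
        fix k assume "k \<in> {..<m}"
        then have "(\<Sum>j<m. u j * ?N $$ (j,k)) = (\<Sum>j<m. u j * (D^^k) (g j))"
          by (intro sum.cong[OF refl]) (simp add: wr_index)
        then show "(\<Sum>j<m. u j * ?N $$ (j,k)) * adj_mat ?N $$ (k,l) = 0" using ueq \<open>k \<in> {..<m}\<close> by simp
      qed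
      finally have "u l * W m g = 0" unfolding W_def .
      then show ?thesis using Wm by simp
    qed
    have vprop: "v m * D (v j) = v j * D (v m)" if j: "j < Suc m" for j
    proof (cases "j = m")
      case True then show ?thesis by (simp add: mult.commute)
    next
      case False
      then have "u j = 0" using u0 j by simp
      then show ?thesis unfolding u_def by (simp add: mult.commute)
    qed
    define c where "c j = (D^^nu (v m)) (v j)" for j
    have cprop: "c j \<in> R \<and> D (c j) = 0" if j: "j < Suc m" for j
      using ratio_const(2)[OF vR vmnz vR vprop[OF j]] DnR[OF vR] unfolding c_def by simp
    have cm: "c m \<noteq> 0" unfolding c_def using lc_nz[OF vR vmnz] .
    have cv: "c m * v j = c j * v m" if j: "j < Suc m" for j
      using ratio_const(1)[OF vR vmnz vR vprop[OF j]] unfolding c_def .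
    have "v m * (\<Sum>j<Suc m. c j * g j) = (\<Sum>j<Suc m. (c j * v m) * g j)"
      by (simp add: sum_distrib_left algebra_simps)
    also have "\<dots> = (\<Sum>j<Suc m. c m * (v j * g j))"
      by (rule sum.cong[OF refl]) (simp add: cv[symmetric] mult.assoc)
    also have "\<dots> = c m * (\<Sum>j<Suc m. v j * (D^^0) (g j))" by (simp only: funpow_0 sum_distrib_left)
    also have "\<dots> = 0" using eqs[of 0] by simp
    finally have "(\<Sum>j<Suc m. c j * g j) = 0" using vmnz by simp
    then have "\<forall>j<Suc m. c j = 0" using Suc.prems(2) cprop unfolding indep_def by blast
    then show False using cm by simp
  qed
qed

lemma W_swap:
  assumes g: "\<And>j. j < Suc m \<Longrightarrow> g j \<in> R" and rel: "(\<Sum>j<Suc m. g j) = 0" and l: "l < m"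
  shows "W m (g \<circ> Transposition.transpose l m) = - W m g"
proof -
  have gm: "(D^^i) (g m) = (\<Sum>s<m. (-1) * (D^^i) (g s))" for i
  proof -
    have "(D^^i) (\<Sum>j<Suc m. g j) = (\<Sum>j<Suc m. (D^^i) (g j))" by (rule Dnsum) (use g in auto)
    then have "(\<Sum>j<Suc m. (D^^i) (g j)) = (D^^i) (\<Sum>j<Suc m. g j)" by simp
    also have "\<dots> = 0" using rel Dn0 by simp
    finally have "(\<Sum>j<m. (D^^i) (g j)) + (D^^i) (g m) = 0" by simp
    then show ?thesis by (simp add: sum_negf eq_neg_iff_add_eq_0 add.commute)
  qed
  have "wr_mat m (g \<circ> Transposition.transpose l m) =
    mat m m (\<lambda>(j,i). if j = l then (\<Sum>s\<in>{..<m}. (-1) * (D^^i) (g s)) else (D^^i) (g j))"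
    by (rule eq_matI) (auto simp: wr_mat_def gm transpose_def)
  then have "W m (g \<circ> Transposition.transpose l m) =
      (\<Sum>s\<in>{..<m}. (-1) * det (mat m m (\<lambda>(j,i). if j = l then (D^^i) (g s) else (D^^i) (g j))))"
    unfolding W_def using l by (simp add: det_row_lin)
  also have "\<dots> = (\<Sum>s\<in>{..<m}. if s = l then - W m g else 0)"
  proof (rule sum.cong[OF refl])
    fix s assume s: "s \<in> {..<m}"
    show "(-1) * det (mat m m (\<lambda>(j,i). if j = l then (D^^i) (g s) else (D^^i) (g j))) = (if s = l then - W m g else 0)"
    proof (cases "s = l")
      case True
      have "mat m m (\<lambda>(j,i). if j = l then (D^^i) (g s) else (D^^i) (g j)) = wr_mat m g"
        by (rule eq_matI) (auto simp: wr_mat_def True)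
      then show ?thesis using True unfolding W_def by simp
    next
      case False
      have "det (mat m m (\<lambda>(j,i). if j = l then (D^^i) (g s) else (D^^i) (g j))) = 0"
      proof (rule det_identical_rows[OF _ False[symmetric]])
        show "mat m m (\<lambda>(j,i). if j = l then (D^^i) (g s) else (D^^i) (g j)) \<in> carrier_mat m m" by simp
        show "l < m" using l .
        show "s < m" using s by simp
        show "row (mat m m (\<lambda>(j,i). if j = l then (D^^i) (g s) else (D^^i) (g j))) l =
              row (mat m m (\<lambda>(j,i). if j = l then (D^^i) (g s) else (D^^i) (g j))) s"
          using l s False by (auto intro!: eq_vecI)
      qed
      then show ?thesis using False by simp
    qed
  qed
  also have "\<dots> = - W m g" using l by (simp add: sum.delta)
  finally show ?thesis .
qed

end

lemma real_nat_diff_ge: "real (a - k) \<ge> real a - real k"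
  by (cases "k \<le> a") (auto simp: of_nat_diff)

lemma arith_core:
  fixes A V :: "nat \<Rightarrow> nat" and Pw :: "nat set" and m n NW T :: nat
  assumes fin: "finite Pw" and ne: "Pw \<noteq> {}"
   and m2: "m \<ge> 2" and mn: "m \<le> n"
   and Apos: "\<forall>j\<in>Pw. A j > 0" and Vpos: "\<forall>j\<in>Pw. V j \<ge> 1"
   and low: "(\<Sum>j\<in>Pw. (A j - (m-2)) * V j) \<le> NW"
   and up: "\<forall>l\<in>Pw. NW + T + A l * V l \<le> (\<Sum>j\<in>Pw. A j * V j)"
   and T: "T \<ge> m - 2"
   and inv: "(\<Sum>j\<in>Pw. 1 / real (A j)) \<le> 1 / (real n - 2)"
  shows False
proof -
  define Vs where "Vs = (\<Sum>j\<in>Pw. real (V j))"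
  define K where "K = real (m-2) * Vs - real T"
  have lowr: "(\<Sum>j\<in>Pw. real (A j) * real (V j)) - real (m-2) * Vs \<le> real NW"
  proof -
    have "(\<Sum>j\<in>Pw. real (A j) * real (V j)) - real (m-2) * Vs = (\<Sum>j\<in>Pw. (real (A j) - real (m-2)) * real (V j))"
      unfolding Vs_def by (simp add: sum_distrib_left sum_distrib_right sum_subtractf algebra_simps)
    also have "\<dots> \<le> (\<Sum>j\<in>Pw. real (A j - (m-2)) * real (V j))"
      by (rule sum_mono) (simp add: mult_right_mono real_nat_diff_ge)
    also have "\<dots> = real (\<Sum>j\<in>Pw. (A j - (m-2)) * V j)" by simp
    also have "\<dots> \<le> real NW" using low by linarith
    finally show ?thesis .
  qed
  have l1: "real (A l) * real (V l) \<le> K" if l: "l \<in> Pw" for l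
  proof -
    have "NW + T + A l * V l \<le> (\<Sum>j\<in>Pw. A j * V j)" using up l by blast
    then have "real (NW + T + A l * V l) \<le> real (\<Sum>j\<in>Pw. A j * V j)" by (simp only: of_nat_le_iff)
    then have "real NW + real T + real (A l) * real (V l) \<le> (\<Sum>j\<in>Pw. real (A j) * real (V j))"
      by simp
    then show ?thesis using lowr unfolding K_def by linarith
  qed
  obtain l0 where l0: "l0 \<in> Pw" using ne by auto
  have "1 \<le> A l0" "1 \<le> V l0" using Apos Vpos l0 by auto
  then have "1 * 1 \<le> A l0 * V l0" by (rule mult_le_mono)
  then have "real 1 \<le> real (A l0 * V l0)" by (simp only: of_nat_le_iff mult_1)
  then have "1 \<le> real (A l0) * real (V l0)" by simp
  then have Kpos: "K > 0" using l1[OF l0] by linarith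
  have m3: "m \<ge> 3"
  proof (rule ccontr)
    assume "\<not> m \<ge> 3"
    then have "m = 2" using m2 by simp
    then have "K = - real T" unfolding K_def by simp
    then show False using Kpos by simp
  qed
  have "Vs \<le> (\<Sum>j\<in>Pw. K / real (A j))"
    unfolding Vs_def
  proof (rule sum_mono)
    fix j assume j: "j \<in> Pw"
    have "real (A j) > 0" using Apos j by simp
    then show "real (V j) \<le> K / real (A j)" using l1[OF j] by (simp add: field_simps mult.commute)
  qed
  also have "\<dots> = K * (\<Sum>j\<in>Pw. 1 / real (A j))" by (simp add: sum_distrib_left)
  also have "\<dots> \<le> K * (1 / (real n - 2))" using inv Kpos by (intro mult_left_mono) auto
  also have "\<dots> \<le> K * (1 / (real m - 2))"
  proof (intro mult_left_mono)
    show "1 / (real n - 2) \<le> 1 / (real m - 2)" using m3 mn by (intro divide_left_mono) auto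
  qed (use Kpos in auto)
  finally have "Vs \<le> K / (real m - 2)" by simp
  then have "(real m - 2) * Vs \<le> K" using m3 by (simp add: field_simps)
  moreover have "real (m - 2) = real m - 2" using m3 by simp
  ultimately have "real T \<le> 0" unfolding K_def by simp
  then show False using T m3 by simp
qed

context lndR begin

lemma Dpow_ker: "x \<in> R \<Longrightarrow> D x = 0 \<Longrightarrow> D (x^k) = 0"
  by (induction k) (simp_all add: D1 Dmult Rpow)

lemma core:
  assumes n3: "n \<ge> 3" and apos: "\<forall>i<n. a i > 0" and xR: "\<forall>i<n. x i \<in> R" and xnz: "\<forall>i<n. x i \<noteq> 0"
    and rp: "\<forall>i<n. \<forall>j<n. i \<noteq> j \<longrightarrow> rpR R (x i) (x j)"
    and sum0: "(\<Sum>i<n. x i ^ a i) = 0"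
    and ineq: "(\<Sum>i<n. 1 / real (a i)) \<le> 1 / (real n - 2)"
  shows "\<forall>i<n. D (x i) = 0"
proof (rule ccontr)
  assume "\<not> (\<forall>i<n. D (x i) = 0)"
  then obtain i0 where i0: "i0 < n" "D (x i0) \<noteq> 0" by auto
  define U where "U = {i. i < n \<and> D (x i) \<noteq> 0}"
  define G where "G j = (if j < n then x j ^ a j else 1)" for j
  define I0 where "I0 = insert n U"
  have finI0: "finite I0" unfolding I0_def U_def by simp
  have GR: "G j \<in> R" if "j < n \<or> j = n" for j unfolding G_def using xR that R1 Rpow by auto
  have Gnz: "G j \<noteq> 0" for j unfolding G_def using xnz by auto
  define isrel where "isrel c \<longleftrightarrow> (\<forall>j. c j \<noteq> 0 \<longrightarrow> j \<in> I0) \<and> (\<forall>j\<in>I0. c j \<in> R \<and> D (c j) = 0)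
      \<and> (\<Sum>j\<in>I0. c j * G j) = 0 \<and> (\<exists>j. c j \<noteq> 0)" for c
  define supp where "supp c = {j \<in> I0. c j \<noteq> 0}" for c :: "nat \<Rightarrow> 'b"
  define NU where "NU = {i. i < n \<and> i \<notin> U}"
  define c0 where "c0 j = (if j \<in> U then 1 else if j = n then (\<Sum>i\<in>NU. x i ^ a i) else 0)" for j
  have nU: "n \<notin> U" unfolding U_def by simp
  have c0rel: "isrel c0"
  proof -
    have A1: "\<forall>j. c0 j \<noteq> 0 \<longrightarrow> j \<in> I0" unfolding c0_def I0_def by auto
    have kerNU: "(\<Sum>i\<in>NU. x i ^ a i) \<in> R \<and> D (\<Sum>i\<in>NU. x i ^ a i) = 0"
    proof
      show "(\<Sum>i\<in>NU. x i ^ a i) \<in> R" using xR unfolding NU_def by (intro Rsum Rpow) auto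
      have "D (\<Sum>i\<in>NU. x i ^ a i) = (\<Sum>i\<in>NU. D (x i ^ a i))"
        using xR unfolding NU_def by (intro Dsum Rpow) auto
      also have "\<dots> = 0" using xR unfolding NU_def U_def by (intro sum.neutral) (auto intro: Dpow_ker)
      finally show "D (\<Sum>i\<in>NU. x i ^ a i) = 0" .
    qed
    have A2: "\<forall>j\<in>I0. c0 j \<in> R \<and> D (c0 j) = 0"
      unfolding c0_def using kerNU R1 D1 R0 D0 by auto
    have "(\<Sum>j\<in>I0. c0 j * G j) = (\<Sum>j\<in>U. c0 j * G j) + c0 n * G n"
      unfolding I0_def using nU finI0 unfolding I0_def by (simp add: add.commute)
    also have "\<dots> = (\<Sum>i\<in>U. x i ^ a i) + (\<Sum>i\<in>NU. x i ^ a i)"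
      unfolding c0_def G_def using nU by (simp add: U_def)
    also have "\<dots> = (\<Sum>i<n. x i ^ a i)"
    proof -
      have "{..<n} = U \<union> NU" "U \<inter> NU = {}" unfolding U_def NU_def by auto
      then show ?thesis by (simp add: sum.union_disjoint U_def NU_def)
    qed
    also have "\<dots> = 0" by (rule sum0)
    finally have A3: "(\<Sum>j\<in>I0. c0 j * G j) = 0" .
    have A4: "\<exists>j. c0 j \<noteq> 0" using i0 unfolding c0_def U_def by (intro exI[of _ i0]) auto
    show ?thesis unfolding isrel_def using A1 A2 A3 A4 by blast
  qed
  have c0card: "card (supp c0) \<le> n"
  proof (cases "NU = {}")
    case True
    then have "supp c0 \<subseteq> U" unfolding supp_def c0_def I0_def by auto
    moreover have "U \<subseteq> {..<n}" unfolding U_def by auto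
    ultimately have "supp c0 \<subseteq> {..<n}" by auto
    then have "card (supp c0) \<le> card {..<n}" by (intro card_mono) auto
    then show ?thesis by simp
  next
    case False
    then obtain i1 where i1: "i1 < n" "i1 \<notin> U" unfolding NU_def by auto
    have "supp c0 \<subseteq> I0" unfolding supp_def by auto
    moreover have "I0 \<subseteq> insert n ({..<n} - {i1})" using i1 unfolding I0_def U_def by auto
    moreover have "card (insert n ({..<n} - {i1})) = n" using i1 by simp
    ultimately have "supp c0 \<subseteq> insert n ({..<n} - {i1})" by auto
    then have "card (supp c0) \<le> card (insert n ({..<n} - {i1}))" by (intro card_mono) auto
    then show ?thesis using \<open>card (insert n ({..<n} - {i1})) = n\<close> by simp
  qed
  obtain c where crel: "isrel c" and cmin: "\<And>c'. isrel c' \<Longrightarrow> card (supp c) \<le> card (supp c')"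
    using ex_has_least_nat[of isrel c0 "\<lambda>c. card (supp c)", OF c0rel] by blast
  define Sp where "Sp = supp c"
  define m where "m = card Sp"
  have finSp: "finite Sp" unfolding Sp_def supp_def using finI0 by simp
  have SpI0: "Sp \<subseteq> I0" unfolding Sp_def supp_def by auto
  have mn: "m \<le> n" unfolding m_def Sp_def using cmin[OF c0rel] c0card by simp
  have cR: "c j \<in> R \<and> D (c j) = 0" if "j \<in> I0" for j using crel that unfolding isrel_def by blast
  have c_out: "c j = 0" if "j \<notin> I0" for j using crel that unfolding isrel_def by blast
  have SpE: "j \<in> Sp \<longleftrightarrow> c j \<noteq> 0" for j unfolding Sp_def supp_def using c_out by auto
  obtain e where e: "bij_betw e {..<m} Sp"
    using ex_bij_betw_nat_finite[OF finSp] unfolding m_def atLeast0LessThan by blast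
  have eSp: "j < m \<Longrightarrow> e j \<in> Sp" for j using e by (auto dest: bij_betwE)
  have einj: "j < m \<Longrightarrow> j' < m \<Longrightarrow> e j = e j' \<Longrightarrow> j = j'" for j j'
    using e unfolding bij_betw_def inj_on_def by auto
  have eI0: "j < m \<Longrightarrow> e j < n \<or> e j = n" for j using eSp SpI0 unfolding I0_def U_def by auto
  define g where "g j = c (e j) * G (e j)" for j
  have gR: "g j \<in> R" if "j < m" for j unfolding g_def using cR eSp SpI0 GR eI0 that Rmult by blast
  have ce_nz: "c (e j) \<noteq> 0" if "j < m" for j using eSp[OF that] SpE by simp
  have sumSp: "(\<Sum>s\<in>Sp. c s * G s) = 0"
  proof -
    have "(\<Sum>s\<in>Sp. c s * G s) = (\<Sum>s\<in>I0. c s * G s)"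
      by (rule sum.mono_neutral_left[OF finI0 SpI0]) (auto simp: SpE)
    then show ?thesis using crel unfolding isrel_def by simp
  qed
  have sumg: "(\<Sum>j<m. g j) = 0"
    unfolding g_def using sum.reindex_bij_betw[OF e, of "\<lambda>s. c s * G s"] sumSp by simp
  have m1: "m \<ge> 1"
  proof -
    obtain j where "c j \<noteq> 0" using crel unfolding isrel_def by blast
    then have "j \<in> Sp" using SpE by simp
    then have "Sp \<noteq> {}" by auto
    then have "card Sp > 0" using finSp by (simp add: card_gt_0_iff)
    then show ?thesis unfolding m_def by simp
  qed
  have m2: "m \<ge> 2"
  proof (rule ccontr)
    assume "\<not> m \<ge> 2"
    then have "m = 1" using m1 by simp
    then have "g 0 = 0" using sumg by simp
    then show False unfolding g_def using ce_nz[of 0] Gnz \<open>m = 1\<close> by simp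
  qed
  define m' where "m' = m - 1"
  have mm': "m = Suc m'" unfolding m'_def using m2 by simp
  have ind: "indep m' g"
    unfolding indep_def
  proof (rule allI, rule impI)
    fix d assume H: "(\<forall>j<m'. d j \<in> R \<and> D (d j) = 0) \<and> (\<Sum>j<m'. d j * g j) = 0"
    define ie where "ie = inv_into {..<m} e"
    have ie_e: "j < m \<Longrightarrow> ie (e j) = j" for j unfolding ie_def using e bij_betw_inv_into_left by fastforce
    have e_ie: "s \<in> Sp \<Longrightarrow> e (ie s) = s" for s unfolding ie_def using e bij_betw_inv_into_right by fastforce
    have ie_lt: "s \<in> Sp \<Longrightarrow> ie s < m" for s unfolding ie_def using e
      by (metis bij_betw_def inv_into_into lessThan_iff)
    define c' where "c' s = (if s \<in> Sp \<and> ie s < m' then d (ie s) * c s else 0)" for s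
    show "\<forall>j<m'. d j = 0"
    proof (rule ccontr)
      assume "\<not> (\<forall>j<m'. d j = 0)"
      then obtain j0 where j0: "j0 < m'" "d j0 \<noteq> 0" by auto
      have r1: "\<forall>j. c' j \<noteq> 0 \<longrightarrow> j \<in> I0" unfolding c'_def using SpI0 by auto
      have r2: "\<forall>j\<in>I0. c' j \<in> R \<and> D (c' j) = 0"
      proof
        fix s assume s: "s \<in> I0"
        show "c' s \<in> R \<and> D (c' s) = 0"
        proof (cases "s \<in> Sp \<and> ie s < m'")
          case True
          then have dR: "d (ie s) \<in> R" "D (d (ie s)) = 0" using H by auto
          have cs: "c s \<in> R" "D (c s) = 0" using cR[OF s] by auto
          have "c' s = d (ie s) * c s" unfolding c'_def using True by simp
          then show ?thesis using dR cs Rmult Dmult by simp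
        next
          case False
          then have "c' s = 0" unfolding c'_def by auto
          then show ?thesis using R0 D0 by simp
        qed
      qed
      have r3: "(\<Sum>s\<in>I0. c' s * G s) = 0"
      proof -
        have "(\<Sum>s\<in>I0. c' s * G s) = (\<Sum>s\<in>Sp. c' s * G s)"
          by (rule sum.mono_neutral_right[OF finI0 SpI0]) (auto simp: c'_def)
        also have "\<dots> = (\<Sum>j<m. c' (e j) * G (e j))"
          using sum.reindex_bij_betw[OF e, of "\<lambda>s. c' s * G s"] by simp
        also have "\<dots> = (\<Sum>j<m. if j < m' then d j * g j else 0)"
          by (rule sum.cong[OF refl]) (auto simp: c'_def ie_e eSp g_def mult.assoc)
        also have "\<dots> = (\<Sum>j<m'. if j < m' then d j * g j else 0)"
          unfolding mm' by simp
        also have "\<dots> = (\<Sum>j<m'. d j * g j)"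
          by (rule sum.cong) auto
        also have "\<dots> = 0" using H by simp
        finally show ?thesis .
      qed
      have r4: "c' (e j0) \<noteq> 0"
        unfolding c'_def using j0 mm' eSp[of j0] ie_e[of j0] ce_nz[of j0] by simp
      have crel': "isrel c'" unfolding isrel_def using r1 r2 r3 r4 by blast
      have "supp c' \<subseteq> Sp - {e m'}"
        unfolding supp_def c'_def using ie_e[of m'] mm' by auto
      moreover have "e m' \<in> Sp" using eSp mm' by simp
      ultimately have "card (supp c') < m"
      proof -
        assume sub: "supp c' \<subseteq> Sp - {e m'}" and em: "e m' \<in> Sp"
        have "card (supp c') \<le> card (Sp - {e m'})" using sub finSp by (intro card_mono) auto
        also have "\<dots> < card Sp" using finSp em by (rule card_Diff1_less)
        finally show ?thesis unfolding m_def .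
      qed
      then show False using cmin[OF crel'] unfolding m_def Sp_def by simp
    qed
  qed
  have gR': "\<And>j. j < Suc m' \<Longrightarrow> g j \<in> R" using gR mm' by simp
  have sumg': "(\<Sum>j<Suc m'. g j) = 0" using sumg mm' by simp
  have Wnz: "W m' g \<noteq> 0" using W_nz[OF _ ind] gR' by simp
  have WR: "W m' g \<in> R" using W_R gR' by simp
  define \<tau> where "\<tau> l = Transposition.transpose l m'" for l
  have swap: "W m' (g \<circ> \<tau> l) = - W m' g" if "l < m'" for l
    unfolding \<tau>_def by (rule W_swap[OF gR' sumg' that])
  define Pw where "Pw = {j. j < m \<and> e j < n}"
  have finPw: "finite Pw" unfolding Pw_def by simp
  have PwU: "e j \<in> U" if "j \<in> Pw" for j using that eSp SpI0 unfolding Pw_def I0_def by auto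
  have nuG: "nu (g j) = (if j \<in> Pw then a (e j) * nu (x (e j)) else 0)" if j: "j < m" for j
  proof (cases "j \<in> Pw")
    case True
    then have en: "e j < n" unfolding Pw_def by simp
    have gj: "g j = c (e j) * x (e j) ^ a (e j)" unfolding g_def G_def using en by simp
    have cej: "c (e j) \<in> R" "D (c (e j)) = 0" using cR eSp[OF j] SpI0 by auto
    have xej: "x (e j) \<in> R" "x (e j) \<noteq> 0" using xR xnz en by auto
    have "nu (g j) = nu (c (e j)) + nu (x (e j) ^ a (e j))"
      unfolding gj using cej xej ce_nz[OF j] by (intro nu_mult) (auto intro: Rpow)
    also have "\<dots> = a (e j) * nu (x (e j))"
      using nu_ker[OF cej] nu_pow[OF xej] by simp
    finally show ?thesis using True by simp
  next
    case False
    then have en: "e j = n" using eI0[OF j] j unfolding Pw_def by auto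
    then have "g j = c n" unfolding g_def G_def by simp
    then show ?thesis using False cR[of n] nu_ker unfolding I0_def by auto
  qed
  define T where "T = (\<Sum>i<m'. i)"
  have up: "nu (W m' g) + T + nu (g l) \<le> (\<Sum>j<m. nu (g j))" if l: "l < m" for l
  proof (cases "l = m'")
    case True
    have "nu (W m' g) + T \<le> (\<Sum>j<m'. nu (g j))" unfolding T_def by (rule W_nu[OF _ Wnz]) (use gR' in auto)
    then show ?thesis using True mm' by simp
  next
    case False
    then have l': "l < m'" using l mm' by simp
    have gtR: "(g \<circ> \<tau> l) j \<in> R" if "j < m'" for j
      using gR' that l' unfolding \<tau>_def by (auto simp: transpose_def)
    have "W m' (g \<circ> \<tau> l) \<noteq> 0" using swap[OF l'] Wnz by simp
    then have b: "nu (W m' (g \<circ> \<tau> l)) + T \<le> (\<Sum>j<m'. nu ((g \<circ> \<tau> l) j))"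
      unfolding T_def by (rule W_nu[rotated]) (use gtR in auto)
    have nuW: "nu (W m' (g \<circ> \<tau> l)) = nu (W m' g)" using swap[OF l'] nu_minus[OF WR] by simp
    have perm: "\<tau> l permutes {..<m}" unfolding \<tau>_def using l' mm' by (intro permutes_swap_id) auto
    have "(\<Sum>j<m. nu (g j)) = (\<Sum>j<m. nu (g (\<tau> l j)))"
      using sum.permute[OF perm, of "\<lambda>j. nu (g j)"] by (simp add: comp_def)
    also have "\<dots> = (\<Sum>j<m'. nu (g (\<tau> l j))) + nu (g (\<tau> l m'))" unfolding mm' by simp
    finally have "(\<Sum>j<m. nu (g j)) = (\<Sum>j<m'. nu (g (\<tau> l j))) + nu (g (\<tau> l m'))" .
    moreover have "\<tau> l m' = l" unfolding \<tau>_def by simp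
    ultimately show ?thesis using b nuW by (simp add: comp_def)
  qed
  have Pwlt: "j \<in> Pw \<Longrightarrow> j < m" for j unfolding Pw_def by simp
  have dv: "dvdR R (x (e j) ^ (a (e j) - (m-2))) (W m' g)" if j: "j \<in> Pw" for j
  proof -
    have jm: "j < m" and en: "e j < n" using j unfolding Pw_def by auto
    have xe: "x (e j) \<in> R" using xR en by simp
    have ceR: "c (e j) \<in> R" "D (c (e j)) = 0" using cR eSp[OF jm] SpI0 by auto
    have dvi: "dvdR R (x (e j) ^ (a (e j) - (m-2))) ((D^^i) (g j))" if i: "i < m'" for i
    proof -
      have "(D^^i) (g j) = c (e j) * (D^^i) (x (e j) ^ a (e j))"
        unfolding g_def G_def using en ceR xe by (simp add: Dnconst_mult Rpow)
      moreover have "dvdR R (x (e j) ^ (a (e j) - (m-2))) ((D^^i) (x (e j) ^ a (e j)))"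
        using xe i mm' by (intro dvd_Dn_pow') auto
      ultimately show ?thesis using dvdR_mult_left ceR by simp
    qed
    show ?thesis
    proof (cases "j < m'")
      case True
      show ?thesis by (rule W_dvd[of m' g j]) (use gR' True dvi in auto)
    next
      case False
      then have jm': "j = m'" using jm mm' by simp
      have m'0: "0 < m'" using m2 mm' by simp
      have "dvdR R (x (e j) ^ (a (e j) - (m-2))) (W m' (g \<circ> \<tau> 0))"
      proof (rule W_dvd[of m' "g \<circ> \<tau> 0" 0])
        show "(g \<circ> \<tau> 0) i \<in> R" if "i < m'" for i
          using gR' that unfolding \<tau>_def by (auto simp: transpose_def)
        show "dvdR R (x (e j) ^ (a (e j) - (m-2))) ((D^^i) ((g \<circ> \<tau> 0) 0))" if "i < m'" for i
          using dvi[OF that] jm' unfolding \<tau>_def by simp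
      qed (rule m'0)
      then have "dvdR R (x (e j) ^ (a (e j) - (m-2))) (- W m' g)" using swap[OF m'0] by simp
      from dvdR_minus[OF this] show ?thesis by simp
    qed
  qed
  have prod_dv: "dvdR R (\<Prod>j\<in>Pw. x (e j) ^ (a (e j) - (m-2))) (W m' g)"
  proof (rule dvd_prod_rp[OF finPw _ _ WR])
    fix j assume j: "j \<in> Pw"
    then show "x (e j) ^ (a (e j) - (m-2)) \<in> R \<and> dvdR R (x (e j) ^ (a (e j) - (m-2))) (W m' g)"
      using dv xR Rpow unfolding Pw_def by auto
  next
    fix i j assume ij: "i \<in> Pw" "j \<in> Pw" "i \<noteq> j"
    then have ne: "e i \<noteq> e j" using einj Pwlt by blast
    have lt: "e i < n" "e j < n" using ij unfolding Pw_def by auto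
    show "rpR R (x (e i) ^ (a (e i) - (m-2))) (x (e j) ^ (a (e j) - (m-2)))"
      using rp lt ne xR xnz by (intro rp_pow_left rp_pow_right Rpow) auto
  qed
  have low: "(\<Sum>j\<in>Pw. (a (e j) - (m-2)) * nu (x (e j))) \<le> nu (W m' g)"
  proof -
    have "nu (\<Prod>j\<in>Pw. x (e j) ^ (a (e j) - (m-2))) = (\<Sum>j\<in>Pw. nu (x (e j) ^ (a (e j) - (m-2))))"
      using xR xnz unfolding Pw_def by (intro nu_prod) (auto intro: Rpow)
    also have "\<dots> = (\<Sum>j\<in>Pw. (a (e j) - (m-2)) * nu (x (e j)))"
      using xR xnz unfolding Pw_def by (intro sum.cong[OF refl]) (auto simp: nu_pow)
    finally have e1: "nu (\<Prod>j\<in>Pw. x (e j) ^ (a (e j) - (m-2))) = (\<Sum>j\<in>Pw. (a (e j) - (m-2)) * nu (x (e j)))" .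
    have "(\<Prod>j\<in>Pw. x (e j) ^ (a (e j) - (m-2))) \<in> R" using xR unfolding Pw_def by (auto intro!: Rprod Rpow)
    then show ?thesis using nu_dvd[OF prod_dv Wnz] e1 by simp
  qed
  have sumnu: "(\<Sum>j<m. nu (g j)) = (\<Sum>j\<in>Pw. a (e j) * nu (x (e j)))"
  proof -
    have "(\<Sum>j<m. nu (g j)) = (\<Sum>j<m. if j \<in> Pw then a (e j) * nu (x (e j)) else 0)"
      by (rule sum.cong[OF refl]) (simp add: nuG)
    also have "\<dots> = (\<Sum>j\<in>{..<m} \<inter> Pw. a (e j) * nu (x (e j)))"
      by (rule sum.inter_restrict[symmetric]) simp
    finally show ?thesis using Pwlt by (simp add: Int_absorb1 subset_iff)
  qed
  have Pwne: "Pw \<noteq> {}"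
  proof
    assume "Pw = {}"
    then have "e 0 = n" "e 1 = n" using eI0[of 0] eI0[of 1] m2 unfolding Pw_def by auto
    then show False using einj[of 0 1] m2 by simp
  qed
  have Tge: "T \<ge> m - 2"
  proof -
    have gen: "(\<Sum>i<k. i) \<ge> k - 1" for k :: nat by (induction k) auto
    show ?thesis unfolding T_def using gen[of m'] mm' by simp
  qed
  have inv: "(\<Sum>j\<in>Pw. 1 / real (a (e j))) \<le> 1 / (real n - 2)"
  proof -
    have inj: "inj_on e Pw" using einj Pwlt unfolding inj_on_def by blast
    have "(\<Sum>j\<in>Pw. 1 / real (a (e j))) = (\<Sum>i\<in>e ` Pw. 1 / real (a i))"
      by (simp add: sum.reindex[OF inj] comp_def)
    also have "\<dots> \<le> (\<Sum>i<n. 1 / real (a i))"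
      by (rule sum_mono2) (auto simp: Pw_def)
    finally show ?thesis using ineq by simp
  qed
  show False
  proof (rule arith_core[OF finPw Pwne m2 mn _ _ low _ Tge inv])
    show "\<forall>j\<in>Pw. 0 < a (e j)" using apos unfolding Pw_def by auto
    show "\<forall>j\<in>Pw. 1 \<le> nu (x (e j))"
    proof
      fix j assume j: "j \<in> Pw"
      then have "e j \<in> U" by (rule PwU)
      then have "D (x (e j)) \<noteq> 0" "x (e j) \<in> R" using xR unfolding U_def by auto
      then show "1 \<le> nu (x (e j))" using nu_zero_iff by fastforce
    qed
    show "\<forall>l\<in>Pw. nu (W m' g) + T + a (e l) * nu (x (e l)) \<le> (\<Sum>j\<in>Pw. a (e j) * nu (x (e j)))"
    proof
      fix l assume l: "l \<in> Pw"
      have "nu (g l) = a (e l) * nu (x (e l))" using nuG[OF Pwlt[OF l]] l by simp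
      then show "nu (W m' g) + T + a (e l) * nu (x (e l)) \<le> (\<Sum>j\<in>Pw. a (e j) * nu (x (e j)))"
        using up[OF Pwlt[OF l]] sumnu by simp
    qed
  qed
qed

end

lemma rel_prime_rpR:
  fixes x y :: "'a::idom"
  assumes sub: "subring R" and fc: "factorially_closed R" and y0: "y \<noteq> 0" and rp: "rel_prime x y"
  shows "rpR R x y"
  unfolding rpR_def
proof (intro ballI impI)
  fix w assume w: "w \<in> R" and d: "dvdR R x (y * w)"
  show "dvdR R x w"
  proof (cases "w = 0")
    case True then show ?thesis unfolding dvdR_def using subringD(1)[OF sub] by (intro bexI[of _ 0]) auto
  next
    case False
    from d obtain q where q: "q \<in> R" "y * w = x * q" unfolding dvdR_def by auto
    have r1: "y * w \<in> range (\<lambda>b. x * b)" unfolding q(2) by (rule rangeI)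
    have r2: "y * w \<in> range (\<lambda>b. y * b)" by (rule rangeI)
    have "y * w \<in> range (\<lambda>b. x * b) \<inter> range (\<lambda>b. y * b)" using r1 r2 by blast
    then have "y * w \<in> range (\<lambda>b. x * y * b)" using rp unfolding rel_prime_def by simp
    then obtain s where s: "y * w = x * y * s" by auto
    then have "y * w = y * (x * s)" by (simp add: algebra_simps)
    then have ws: "w = x * s" using y0 by simp
    have "x \<noteq> 0" "s \<noteq> 0" using ws False by auto
    then have "s \<in> R" using fc w ws unfolding factorially_closed_def by blast
    then show ?thesis unfolding dvdR_def using ws by blast
  qed
qed

lemma lndR_intro: "subring R \<Longrightarrow> lnd_on R D \<Longrightarrow> lndR R D"
  by (simp add: lndR_def)

lemma mlinv_subring:
  fixes R :: "'a::{idom,ring_char_0} set"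
  assumes sub: "subring R" shows "subring (mlinv R)"
proof -
  have z: "D 0 = 0 \<and> D 1 = 0" if D: "lnd_on R D" for D
  proof -
    interpret L: lndR R D by (rule lndR_intro[OF sub D])
    show ?thesis using L.D0 L.D1 by simp
  qed
  have ops: "D (x+y) = 0 \<and> D (x-y) = 0 \<and> D (x*y) = 0"
    if D: "lnd_on R D" and xR: "x \<in> R" and yR: "y \<in> R" and Dx: "D x = 0" and Dy: "D y = 0" for D x y
  proof -
    interpret L: lndR R D by (rule lndR_intro[OF sub D])
    show ?thesis using L.Dadd[OF xR yR] L.Ddiff[OF xR yR] L.Dmult[OF xR yR] Dx Dy by simp
  qed
  show ?thesis unfolding subring_def mlinv_def
    using subringD[OF sub] z ops by auto
qed

lemma mlinv_fc:
  fixes R :: "'a::{idom,ring_char_0} set"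
  assumes sub: "subring R" and fc: "factorially_closed R" shows "factorially_closed (mlinv R)"
  unfolding factorially_closed_def
proof (intro allI impI)
  fix x y :: 'a assume x0: "x \<noteq> 0" and y0: "y \<noteq> 0" and xy: "x * y \<in> mlinv R"
  have xyR: "x * y \<in> R" and Dxy: "\<And>D. lnd_on R D \<Longrightarrow> D (x*y) = 0" using xy unfolding mlinv_def by auto
  have xR: "x \<in> R" and yR: "y \<in> R" using fc[unfolded factorially_closed_def, rule_format, OF x0 y0 xyR] by auto
  have "D x = 0 \<and> D y = 0" if D: "lnd_on R D" for D
  proof -
    interpret L: lndR R D by (rule lndR_intro[OF sub D])
    have "D x = 0" using L.ker_fact[OF xR yR x0 y0] Dxy[OF D] by simp
    moreover have "D y = 0" using L.ker_fact[OF yR xR y0 x0] Dxy[OF D] by (simp add: mult.commute)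
    ultimately show ?thesis by simp
  qed
  then show "x \<in> mlinv R \<and> y \<in> mlinv R" unfolding mlinv_def using xR yR by auto
qed

lemma part_a:
  fixes x :: "nat \<Rightarrow> 'a::{idom, ring_char_0}" and a :: "nat \<Rightarrow> nat" and n :: nat
  assumes n3: "n \<ge> 3"
    and apos: "\<forall>i<n. a i > 0"
    and sum0: "(\<Sum>i<n. x i ^ a i) = 0"
    and ineq: "(\<Sum>i<n. 1 / real (a i)) \<le> 1 / (real n - 2)"
    and rpall: "\<forall>i<n. \<forall>j<n. i \<noteq> j \<longrightarrow> rel_prime (x i) (x j)"
    and sub: "subring R" and fc: "factorially_closed R" and xR: "\<forall>i<n. x i \<in> R"
  shows "\<forall>i<n. x i \<in> mlinv R"
proof -
  have "D (x i) = 0" if D: "lnd_on R D" and i: "i < n" for D i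
  proof -
    interpret L: lndR R D by (rule lndR_intro[OF sub D])
    show ?thesis
    proof (cases "\<forall>i<n. x i \<noteq> 0")
      case True
      have "\<forall>i<n. \<forall>j<n. i \<noteq> j \<longrightarrow> rpR R (x i) (x j)" using rel_prime_rpR[OF sub fc] True rpall by auto
      then show ?thesis using L.core[OF n3 apos xR True _ sum0 ineq] i by auto
    next
      case False
      then obtain k where k: "k < n" "x k = 0" by auto
      show ?thesis
      proof (cases "i = k")
        case True then show ?thesis using k L.D0 by simp
      next
        case ik: False
        have "rel_prime (x k) (x i)" using rpall k i ik by auto
        then have "x k dvd 1 \<or> x i dvd 1" using k unfolding rel_prime_def by simp
        then have "x i dvd 1" using k by simp
        then obtain v where v: "1 = x i * v" by (auto elim: dvdE)
        have xi0: "x i \<noteq> 0" and v0: "v \<noteq> 0" using v by auto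
        have "x i * v \<in> R" using v[symmetric] L.R1 by simp
        then have "v \<in> R" using fc[unfolded factorially_closed_def, rule_format, OF xi0 v0] by simp
        then show ?thesis using L.unit_ker[of "x i" v] xR i v by simp
      qed
    qed
  qed
  then show ?thesis unfolding mlinv_def using xR by auto
qed

lemma part_c:
  fixes x :: "nat \<Rightarrow> 'a::{idom, ring_char_0}" and a :: "nat \<Rightarrow> nat" and n :: nat
  assumes n3: "n \<ge> 3"
    and apos: "\<forall>i<n. a i > 0"
    and sum0: "(\<Sum>i<n. x i ^ a i) = 0"
    and ineq: "(\<Sum>i<n. 1 / real (a i)) \<le> 1 / (real n - 2)"
    and rpall: "\<forall>i<n. \<forall>j<n. i \<noteq> j \<longrightarrow> rel_prime (x i) (x j)"
  shows "\<forall>i<n. x i \<in> rigid_core"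
proof -
  have "subring (mlinv_iter k :: 'a set) \<and> factorially_closed (mlinv_iter k :: 'a set) \<and> (\<forall>i<n. x i \<in> mlinv_iter k)" for k
  proof (induction k)
    case 0
    show ?case by (simp add: subring_def factorially_closed_def)
  next
    case (Suc k)
    then have s: "subring (mlinv_iter k :: 'a set)" and f: "factorially_closed (mlinv_iter k :: 'a set)"
      and xk: "\<forall>i<n. x i \<in> mlinv_iter k" by auto
    show ?case using mlinv_subring[OF s] mlinv_fc[OF s f] part_a[OF n3 apos sum0 ineq rpall s f xk] by simp
  qed
  then show ?thesis unfolding rigid_core_def by auto
qed

lemma lookup_const_mult: "Poly_Mapping.lookup (const_poly s * p) m = s * Poly_Mapping.lookup p m"
  unfolding const_poly_def mult_map_scale_conv_mult[symmetric]
  by (simp add: Poly_Mapping.map.rep_eq when_def)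

lemma const_mult: "const_poly (a * b) = const_poly a * (const_poly b :: (nat \<Rightarrow>\<^sub>0 nat) \<Rightarrow>\<^sub>0 'a::comm_ring_1)"
  unfolding const_poly_def by (simp add: mult_single)
lemma const_add: "const_poly (a + b) = const_poly a + (const_poly b :: (nat \<Rightarrow>\<^sub>0 nat) \<Rightarrow>\<^sub>0 'a::comm_ring_1)"
  unfolding const_poly_def by (simp add: single_add)
lemma const_one: "const_poly 1 = (1 :: (nat \<Rightarrow>\<^sub>0 nat) \<Rightarrow>\<^sub>0 'a::comm_ring_1)"
  unfolding const_poly_def by simp
lemma const_zero: "const_poly 0 = (0 :: (nat \<Rightarrow>\<^sub>0 nat) \<Rightarrow>\<^sub>0 'a::comm_ring_1)"
  unfolding const_poly_def by simp
lemma const_pow: "const_poly (a ^ k) = (const_poly a ^ k :: (nat \<Rightarrow>\<^sub>0 nat) \<Rightarrow>\<^sub>0 'a::comm_ring_1)"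
  by (induction k) (simp_all add: const_one const_mult)
lemma const_sum: "const_poly (sum f S) = (\<Sum>i\<in>S. const_poly (f i) :: (nat \<Rightarrow>\<^sub>0 nat) \<Rightarrow>\<^sub>0 'a::comm_ring_1)"
  by (induction S rule: infinite_finite_induct) (simp_all add: const_zero const_add)
lemma const_eq0: "(const_poly a :: (nat \<Rightarrow>\<^sub>0 nat) \<Rightarrow>\<^sub>0 'a::comm_ring_1) = 0 \<longleftrightarrow> a = 0"
proof
  assume "const_poly a = (0 :: (nat \<Rightarrow>\<^sub>0 nat) \<Rightarrow>\<^sub>0 'a)"
  then have "Poly_Mapping.lookup (const_poly a :: (nat \<Rightarrow>\<^sub>0 nat) \<Rightarrow>\<^sub>0 'a) 0 = 0" by simp
  then show "a = 0" unfolding const_poly_def by simp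
qed (simp add: const_zero)

lemma poly_ring_subring: "subring (poly_ring N :: ((nat \<Rightarrow>\<^sub>0 nat) \<Rightarrow>\<^sub>0 'a::comm_ring_1) set)"
  unfolding subring_def
proof (intro conjI ballI)
  show "0 \<in> (poly_ring N :: ((nat \<Rightarrow>\<^sub>0 nat) \<Rightarrow>\<^sub>0 'a) set)" unfolding poly_ring_def by simp
  show "1 \<in> (poly_ring N :: ((nat \<Rightarrow>\<^sub>0 nat) \<Rightarrow>\<^sub>0 'a) set)" unfolding poly_ring_def by simp
  fix x y :: "(nat \<Rightarrow>\<^sub>0 nat) \<Rightarrow>\<^sub>0 'a" assume x: "x \<in> poly_ring N" and y: "y \<in> poly_ring N"
  then have kx: "\<And>m i. m \<in> Poly_Mapping.keys x \<Longrightarrow> i \<in> Poly_Mapping.keys m \<Longrightarrow> i < N"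
    and ky: "\<And>m i. m \<in> Poly_Mapping.keys y \<Longrightarrow> i \<in> Poly_Mapping.keys m \<Longrightarrow> i < N"
    unfolding poly_ring_def by auto
  show "x + y \<in> poly_ring N" unfolding poly_ring_def
    using keys_add[of x y] kx ky by blast
  show "x - y \<in> poly_ring N" unfolding poly_ring_def
    using keys_diff[of x y] kx ky by blast
  show "x * y \<in> poly_ring N" unfolding poly_ring_def mem_Collect_eq
  proof (intro ballI)
    fix m i assume m: "m \<in> Poly_Mapping.keys (x * y)" and i: "i \<in> Poly_Mapping.keys m"
    obtain u v where uv: "m = u + v" "u \<in> Poly_Mapping.keys x" "v \<in> Poly_Mapping.keys y"
      using keys_mult[of x y] m by blast
    have "i \<in> Poly_Mapping.keys u \<union> Poly_Mapping.keys v" using keys_add[of u v] i uv(1) by blast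
    then show "i < N" using kx[OF uv(2)] ky[OF uv(3)] by blast
  qed
qed

lemma const_in: "const_poly c \<in> poly_ring N"
  unfolding poly_ring_def const_poly_def by simp

lemma rp_const:
  fixes xi xj :: "'a::idom"
  assumes xj0: "xj \<noteq> 0" and rp: "rel_prime xi xj"
  shows "rpR (poly_ring N) (const_poly xi) (const_poly xj)"
  unfolding rpR_def
proof (intro ballI impI)
  fix w :: "(nat \<Rightarrow>\<^sub>0 nat) \<Rightarrow>\<^sub>0 'a"
  assume w: "w \<in> poly_ring N" and d: "dvdR (poly_ring N) (const_poly xi) (const_poly xj * w)"
  then obtain q where q: "q \<in> poly_ring N" "const_poly xj * w = const_poly xi * q" unfolding dvdR_def by auto
  have ex: "\<exists>t. Poly_Mapping.lookup w m = xi * t" for m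
  proof -
    have e: "xj * Poly_Mapping.lookup w m = xi * Poly_Mapping.lookup q m"
      using arg_cong[OF q(2), of "\<lambda>p. Poly_Mapping.lookup p m"] by (simp add: lookup_const_mult)
    have r1: "xj * Poly_Mapping.lookup w m \<in> range (\<lambda>b. xi * b)" unfolding e by (rule rangeI)
    have r2: "xj * Poly_Mapping.lookup w m \<in> range (\<lambda>b. xj * b)" by (rule rangeI)
    have "xj * Poly_Mapping.lookup w m \<in> range (\<lambda>b. xi * xj * b)"
      using r1 r2 rp unfolding rel_prime_def by blast
    then obtain t where "xj * Poly_Mapping.lookup w m = xi * xj * t" by auto
    then have "xj * Poly_Mapping.lookup w m = xj * (xi * t)" by (simp add: algebra_simps)
    then have "Poly_Mapping.lookup w m = xi * t" using xj0 by simp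
    then show ?thesis by blast
  qed
  define s where "s = Poly_Mapping.mapp (\<lambda>m v. SOME t. v = xi * t) w"
  have ls: "Poly_Mapping.lookup s m = ((SOME t. Poly_Mapping.lookup w m = xi * t) when m \<in> Poly_Mapping.keys w)" for m
    unfolding s_def by (simp add: lookup_mapp)
  have "const_poly xi * s = w"
  proof (rule poly_mapping_eqI)
    fix m
    show "Poly_Mapping.lookup (const_poly xi * s) m = Poly_Mapping.lookup w m"
    proof (cases "m \<in> Poly_Mapping.keys w")
      case True
      then show ?thesis unfolding lookup_const_mult ls using someI_ex[OF ex[of m]] by simp
    next
      case False
      then show ?thesis unfolding lookup_const_mult ls by (simp add: in_keys_iff)
    qed
  qed
  moreover have "s \<in> poly_ring N" using w keys_mapp_subset[of _ w] unfolding poly_ring_def s_def by blast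
  ultimately show "dvdR (poly_ring N) (const_poly xi) w" unfolding dvdR_def by auto
qed

lemma part_b:
  fixes x :: "nat \<Rightarrow> 'a::{idom, ring_char_0}" and a :: "nat \<Rightarrow> nat" and n :: nat
  assumes n3: "n \<ge> 3"
    and apos: "\<forall>i<n. a i > 0"
    and sum0: "(\<Sum>i<n. x i ^ a i) = 0"
    and ineq: "(\<Sum>i<n. 1 / real (a i)) \<le> 1 / (real n - 2)"
    and rpall: "\<forall>i<n. \<forall>j<n. i \<noteq> j \<longrightarrow> rel_prime (x i) (x j)"
  shows "\<forall>i<n. const_poly (x i) \<in> mlinv (poly_ring N)"
proof -
  define X where "X i = (const_poly (x i) :: (nat \<Rightarrow>\<^sub>0 nat) \<Rightarrow>\<^sub>0 'a)" for i
  have sub: "subring (poly_ring N :: ((nat \<Rightarrow>\<^sub>0 nat) \<Rightarrow>\<^sub>0 'a) set)" by (rule poly_ring_subring)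
  have XP: "\<forall>i<n. X i \<in> poly_ring N" unfolding X_def using const_in by blast
  have "D (X i) = 0" if D: "lnd_on (poly_ring N) D" and i: "i < n" for D i
  proof -
    interpret L: lndR "poly_ring N :: ((nat \<Rightarrow>\<^sub>0 nat) \<Rightarrow>\<^sub>0 'a) set" D by (rule lndR_intro[OF sub D])
    show ?thesis
    proof (cases "\<forall>i<n. x i \<noteq> 0")
      case True
      have Xnz: "\<forall>i<n. X i \<noteq> 0" using True unfolding X_def by (simp add: const_eq0)
      have rpX: "\<forall>i<n. \<forall>j<n. i \<noteq> j \<longrightarrow> rpR (poly_ring N) (X i) (X j)"
        unfolding X_def using rp_const True rpall by blast
      have sumX: "(\<Sum>i<n. X i ^ a i) = 0"
        unfolding X_def const_pow[symmetric] const_sum[symmetric] sum0 by (rule const_zero)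
      show ?thesis using L.core[OF n3 apos XP Xnz rpX sumX ineq] i by auto
    next
      case False
      then obtain k where k: "k < n" "x k = 0" by auto
      show ?thesis
      proof (cases "i = k")
        case True then show ?thesis using k L.D0 unfolding X_def by (simp add: const_zero)
      next
        case ik: False
        have "rel_prime (x k) (x i)" using rpall k i ik by auto
        then have "x k dvd 1 \<or> x i dvd 1" using k unfolding rel_prime_def by simp
        then have "x i dvd 1" using k by simp
        then obtain v where v: "1 = x i * v" by (auto elim: dvdE)
        have "X i * const_poly v = 1" unfolding X_def const_mult[symmetric] v[symmetric] by (rule const_one)
        from L.unit_ker[OF _ const_in this] show ?thesis using XP i by simp
      qed
    qed
  qed
  then show ?thesis unfolding mlinv_def using XP X_def by auto
qed

theorem theorem6p7:
  fixes x :: "nat \<Rightarrow> 'a::{idom, ring_char_0}" and a :: "nat \<Rightarrow> nat" and n :: nat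
  assumes "n \<ge> 3"
    and "\<forall>i<n. a i > 0"
    and "(\<Sum>i<n. x i ^ a i) = 0"
    and "(\<Sum>i<n. 1 / real (a i)) \<le> 1 / (real n - 2)"
    and "\<forall>i<n. \<forall>j<n. i \<noteq> j \<longrightarrow> rel_prime (x i) (x j)"
  shows "(\<forall>R. subring R \<and> factorially_closed R \<and> (\<forall>i<n. x i \<in> R) \<longrightarrow> (\<forall>i<n. x i \<in> mlinv R))
       \<and> (\<forall>N. \<forall>i<n. const_poly (x i) \<in> mlinv (poly_ring N))
       \<and> (\<forall>i<n. x i \<in> rigid_core)"
  using part_a[OF assms] part_b[OF assms] part_c[OF assms] by blast

end
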